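(* Let $a<b$, $n\in\mathbb N$, $\alpha=(\alpha_1,\ldots,\alpha_n)$ with $\alpha_j\in(0,1)$, $z_a\in\mathbb R$, $x_a\in\mathbb R^n$. Let $L:[a,b]\times\mathbb R^{2n+1}\to\mathbb R$, $L=L(t,x,v,z)$, be of class $C^1$. For $x\in C^1([a,b],\mathbb R^n)$ with ${^C_aD^\alpha_t}x:=({^C_aD^{\alpha_1}_t}x_1,\ldots,{^C_aD^{\alpha_n}_t}x_n)\in C^1([a,b],\mathbb R^n)$, let $z[x;\cdot]$ be the solution of $\frac{dz}{dt}=L(t,x(t),{^C_aD^\alpha_t}x(t),z(t))$, $t\in[a,b]$, $z(a)=z_a$. Write $[x,z](t):=(t,x(t),{^C_aD^\alpha_t}x(t),z(t))$ and $\lambda(t):=\exp\left(-\int_a^t\frac{\partial L}{\partial z}[x,z](\tau)\,d\tau\right)$, and assume that ${_tD^{\alpha_j}_b}\left(\lambda(t)\frac{\partial L}{\partial {^C_aD^{\alpha_j}_t}x_j}[x,z](t)\right)$ exists and is continuous on $[a,b]$ for each $j$. Suppose $x(a)=x_a$ and, for some set $J\subseteq\{1,\ldots,n\}$, the end values $x_j(b)$, $j\notin J$, are prescribed while $x_j(b)$, $j\in J$, are free. If $x$ is such that $z[x;b]$ attains an extremum over this class (i.e. $\frac{d}{d\epsilon}z[x+\epsilon\eta;b]|_{\epsilon=0}=0$ for all $\eta\in C^1([a,b],\mathbb R^n)$ with ${^C_aD^\alpha_t}\eta\in C^1$, $\eta(a)=0$, and $\eta_j(b)=0$ for $j\notin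 J$), then $x$ satisfies, for $j=1,\ldots,n$ and $t\in[a,b]$, $$\lambda(t)\frac{\partial L}{\partial x_j}[x,z](t)+{_tD^{\alpha_j}_b}\left(\lambda(t)\frac{\partial L}{\partial {^C_aD^{\alpha_j}_t}x_j}[x,z](t)\right)=0,$$ and, for every $j\in J$, the transversality condition $${_tI^{1-\alpha_j}_b}\left(\lambda(t)\frac{\partial L}{\partial {^C_aD^{\alpha_j}_t}x_j}[x,z](t)\right)\Big|_{t=b}=0.$$
   Context: For $\alpha\in(0,1)$ and $f:[a,b]\to\mathbb R$: ${^C_aD^\alpha_t}f(t)=\frac{1}{\Gamma(1-\alpha)}\int_a^t(t-\tau)^{-\alpha}f'(\tau)\,d\tau$ (left Caputo derivative); ${_tI^{\beta}_b}f(t)=\frac{1}{\Gamma(\beta)}\int_t^b(\tau-t)^{\beta-1}f(\tau)\,d\tau$ (right Riemann–Liouville integral, $\beta>0$); ${_tD^\alpha_b}f(t)=\frac{-1}{\Gamma(1-\alpha)}\frac{d}{dt}\int_t^b(\tau-t)^{-\alpha}f(\tau)\,d\tau$ (right Riemann–Liouville derivative). Partial derivatives of $L$ are taken with respect to the corresponding components of its arguments $(t,x,v,z)$, with $\frac{\partial L}{\partial {^C_aD^{\alpha_j}_t}x_j}$ meaning $\partial L/\partial v_j$. The solution $z$ is assumed to exist and depend differentiably on a parameter $\epsilon$ when $x$ is replaced by $x+\epsilon\eta$, with the same initial value $z_a$. *)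

theory Defs
  imports "HOL-Analysis.Analysis"
begin

definition C1_on :: "real set \<Rightarrow> (real \<Rightarrow> 'a::real_normed_vector) \<Rightarrow> bool" where
  "C1_on S f \<longleftrightarrow> (\<exists>f'. (\<forall>t\<in>S. (f has_vector_derivative f' t) (at t within S)) \<and> continuous_on S f')"

definition caputo_left :: "real \<Rightarrow> real \<Rightarrow> (real \<Rightarrow> real) \<Rightarrow> real \<Rightarrow> real" where
  "caputo_left a \<alpha> f t =
     1 / Gamma (1 - \<alpha>) * integral {a..t} (\<lambda>\<tau>. (t - \<tau>) powr (- \<alpha>) * vector_derivative f (at \<tau>))"

definition caputo_vec :: "real \<Rightarrow> ('n::finite \<Rightarrow> real) \<Rightarrow> (real \<Rightarrow> real^'n) \<Rightarrow> real \<Rightarrow> real^'n" where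
  "caputo_vec a \<alpha> x t = (\<chi> j. caputo_left a (\<alpha> j) (\<lambda>s. x s $ j) t)"

definition right_RL_int :: "real \<Rightarrow> real \<Rightarrow> (real \<Rightarrow> real) \<Rightarrow> real \<Rightarrow> real" where
  "right_RL_int \<beta> b f t = 1 / Gamma \<beta> * integral {t..b} (\<lambda>\<tau>. (\<tau> - t) powr (\<beta> - 1) * f \<tau>)"

definition right_RL_kernel :: "real \<Rightarrow> real \<Rightarrow> (real \<Rightarrow> real) \<Rightarrow> real \<Rightarrow> real" where
  "right_RL_kernel \<alpha> b f s = integral {s..b} (\<lambda>\<tau>. (\<tau> - s) powr (- \<alpha>) * f \<tau>)"

definition right_RL_deriv_exists :: "real \<Rightarrow> real \<Rightarrow> real \<Rightarrow> (real \<Rightarrow> real) \<Rightarrow> real \<Rightarrow> bool" where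
  "right_RL_deriv_exists a b \<alpha> f t \<longleftrightarrow> right_RL_kernel \<alpha> b f differentiable (at t within {a..b})"

definition right_RL_deriv :: "real \<Rightarrow> real \<Rightarrow> real \<Rightarrow> (real \<Rightarrow> real) \<Rightarrow> real \<Rightarrow> real" where
  "right_RL_deriv a b \<alpha> f t =
     - 1 / Gamma (1 - \<alpha>) * vector_derivative (right_RL_kernel \<alpha> b f) (at t within {a..b})"

definition admissible :: "real \<Rightarrow> real \<Rightarrow> ('n::finite \<Rightarrow> real) \<Rightarrow> (real \<Rightarrow> real^'n) \<Rightarrow> bool" where
  "admissible a b \<alpha> y \<longleftrightarrow> C1_on {a..b} y \<and> C1_on {a..b} (caputo_vec a \<alpha> y)"

definition herglotz_solution ::
  "real \<Rightarrow> real \<Rightarrow> ('n::finite \<Rightarrow> real) \<Rightarrow> (real \<Rightarrow> real^'n \<Rightarrow> real^'n \<Rightarrow> real \<Rightarrow> real)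
   \<Rightarrow> real \<Rightarrow> (real \<Rightarrow> real^'n) \<Rightarrow> (real \<Rightarrow> real) \<Rightarrow> bool" where
  "herglotz_solution a b \<alpha> L za y z \<longleftrightarrow> z a = za \<and>
     (\<forall>t\<in>{a..b}. (z has_real_derivative L t (y t) (caputo_vec a \<alpha> y t) (z t)) (at t within {a..b}))"

definition herglotz_lambda ::
  "real \<Rightarrow> ('n::finite \<Rightarrow> real) \<Rightarrow> (real \<Rightarrow> real^'n \<Rightarrow> real^'n \<Rightarrow> real \<Rightarrow> real)
   \<Rightarrow> (real \<Rightarrow> real^'n) \<Rightarrow> (real \<Rightarrow> real) \<Rightarrow> real \<Rightarrow> real" where
  "herglotz_lambda a \<alpha> Lz x z t =
     exp (- integral {a..t} (\<lambda>\<tau>. Lz \<tau> (x \<tau>) (caputo_vec a \<alpha> x \<tau>) (z \<tau>)))"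

end

theory Submission
  imports Defs
begin

lemma kern_left:
  fixes \<alpha> c d :: real
  assumes "0 < \<alpha>" "\<alpha> < 1" "c \<le> d"
  shows "((\<lambda>s. (s - c) powr (- \<alpha>)) has_integral (d - c) powr (1 - \<alpha>) / (1 - \<alpha>)) {c..d}"
proof -
  define F where "F s = (s - c) powr (1 - \<alpha>) / (1 - \<alpha>)" for s
  have "((\<lambda>s. (s - c) powr (- \<alpha>)) has_integral (F d - F c)) {c..d}"
  proof (rule fundamental_theorem_of_calculus_interior[OF assms(3)])
    show "continuous_on {c..d} F"
      unfolding F_def using assms by (intro continuous_intros continuous_on_powr') auto
    fix x assume x: "x \<in> {c<..<d}"
    have "(F has_real_derivative ((1 - \<alpha>) * (x - c) powr (1 - \<alpha> - 1) * 1 / (1 - \<alpha>))) (at x)"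
      unfolding F_def using x by (auto intro!: derivative_eq_intros)
    moreover have "(1 - \<alpha>) * (x - c) powr (1 - \<alpha> - 1) * 1 / (1 - \<alpha>) = (x - c) powr (- \<alpha>)"
      using assms by simp
    ultimately show "(F has_vector_derivative (x - c) powr (- \<alpha>)) (at x)"
      by (simp add: has_real_derivative_iff_has_vector_derivative)
  qed
  then show ?thesis by (simp add: F_def)
qed

lemma kern_right:
  fixes \<alpha> c d :: real
  assumes "0 < \<alpha>" "\<alpha> < 1" "c \<le> d"
  shows "((\<lambda>s. (d - s) powr (- \<alpha>)) has_integral (d - c) powr (1 - \<alpha>) / (1 - \<alpha>)) {c..d}"
proof -
  define F where "F s = - ((d - s) powr (1 - \<alpha>) / (1 - \<alpha>))" for s
  have "((\<lambda>s. (d - s) powr (- \<alpha>)) has_integral (F d - F c)) {c..d}"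
  proof (rule fundamental_theorem_of_calculus_interior[OF assms(3)])
    show "continuous_on {c..d} F"
      unfolding F_def using assms by (intro continuous_intros continuous_on_powr') auto
    fix x assume x: "x \<in> {c<..<d}"
    have "(F has_real_derivative - ((1 - \<alpha>) * (d - x) powr (1 - \<alpha> - 1) * (0 - 1) / (1 - \<alpha>))) (at x)"
      unfolding F_def using x by (auto intro!: derivative_eq_intros)
    moreover have "- ((1 - \<alpha>) * (d - x) powr (1 - \<alpha> - 1) * (0 - 1) / (1 - \<alpha>)) = (d - x) powr (- \<alpha>)"
      using assms by simp
    ultimately show "(F has_vector_derivative (d - x) powr (- \<alpha>)) (at x)"
      by (simp add: has_real_derivative_iff_has_vector_derivative)
  qed
  then show ?thesis by (simp add: F_def)
qed


lemma kern_int_ok: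
  fixes \<alpha> t a :: real
  assumes "0 < \<alpha>" "\<alpha> < 1" "a \<le> t"
  shows "integrable lborel (\<lambda>\<tau>. indicator {a..t} \<tau> * (t - \<tau>) powr (- \<alpha>))"
    and "(\<integral>\<^sup>+\<tau>. ennreal (indicator {a..t} \<tau> * (t - \<tau>) powr (- \<alpha>)) \<partial>lborel) = ennreal ((t - a) powr (1 - \<alpha>) / (1 - \<alpha>))"
proof -
  show nn: "(\<integral>\<^sup>+\<tau>. ennreal (indicator {a..t} \<tau> * (t - \<tau>) powr (- \<alpha>)) \<partial>lborel) = ennreal ((t - a) powr (1 - \<alpha>) / (1 - \<alpha>))"
    using nn_integral_has_integral_lebesgue[OF _ kern_right[OF assms]] by simp
  show "integrable lborel (\<lambda>\<tau>. indicator {a..t} \<tau> * (t - \<tau>) powr (- \<alpha>))"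
    by (rule integrableI_nonneg) (auto simp: nn)
qed

lemma kern_int_ok2:
  fixes \<alpha> t b :: real
  assumes "0 < \<alpha>" "\<alpha> < 1" "t \<le> b"
  shows "integrable lborel (\<lambda>s. indicator {t..b} s * (s - t) powr (- \<alpha>))"
proof -
  have nn: "(\<integral>\<^sup>+s. ennreal (indicator {t..b} s * (s - t) powr (- \<alpha>)) \<partial>lborel) = ennreal ((b - t) powr (1 - \<alpha>) / (1 - \<alpha>))"
    using nn_integral_has_integral_lebesgue[OF _ kern_left[OF assms]] by simp
  show ?thesis
    by (rule integrableI_nonneg) (auto simp: nn)
qed

lemma fubini_tri_UNIV:
  fixes f p :: "real \<Rightarrow> real" and \<alpha> a b Mf Mp :: real
  assumes fc: "continuous_on UNIV f" and pc: "continuous_on UNIV p"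
    and al: "0 < \<alpha>" "\<alpha> < 1" and ab: "a \<le> b"
    and fb: "\<And>t. t \<in> {a..b} \<Longrightarrow> \<bar>f t\<bar> \<le> Mf" and pb: "\<And>t. t \<in> {a..b} \<Longrightarrow> \<bar>p t\<bar> \<le> Mp"
  shows "integral {a..b} (\<lambda>t. f t * integral {a..t} (\<lambda>\<tau>. (t - \<tau>) powr (- \<alpha>) * p \<tau>)) =
         integral {a..b} (\<lambda>\<tau>. p \<tau> * integral {\<tau>..b} (\<lambda>t. (t - \<tau>) powr (- \<alpha>) * f t))"
proof -
  have fm[measurable]: "f \<in> borel_measurable borel" using fc by (rule borel_measurable_continuous_onI)
  have pm[measurable]: "p \<in> borel_measurable borel" using pc by (rule borel_measurable_continuous_onI)
  define F where "F t \<tau> = (if a \<le> \<tau> \<and> \<tau> \<le> t \<and> t \<le> b then (t - \<tau>) powr (- \<alpha>) * (f t * p \<tau>) else 0)" for t \<tau> :: real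
  have Fm[measurable]: "(\<lambda>x. F (fst x) (snd x)) \<in> borel_measurable (lborel \<Otimes>\<^sub>M lborel)"
    unfolding F_def by measurable
  have Mf0: "0 \<le> Mf" using fb[of a] ab by auto
  have Mp0: "0 \<le> Mp" using pb[of a] ab by auto
  define G where "G x = indicator {(t, \<tau>). a \<le> \<tau> \<and> \<tau> \<le> t \<and> t \<le> b} x * (fst x - snd x) powr (- \<alpha>)" for x :: "real \<times> real"
  have Gm[measurable]: "G \<in> borel_measurable (lborel \<Otimes>\<^sub>M lborel)"
    unfolding G_def by measurable
  have "(\<integral>\<^sup>+x. ennreal (G x) \<partial>(lborel \<Otimes>\<^sub>M lborel)) = (\<integral>\<^sup>+t. \<integral>\<^sup>+\<tau>. ennreal (G (t, \<tau>)) \<partial>lborel \<partial>lborel)"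
    by (rule lborel.nn_integral_fst[symmetric]) measurable
  also have "\<dots> \<le> (\<integral>\<^sup>+t. ennreal ((b - a) powr (1 - \<alpha>) / (1 - \<alpha>)) * indicator {a..b} t \<partial>lborel)"
  proof (rule nn_integral_mono)
    fix t :: real
    show "(\<integral>\<^sup>+\<tau>. ennreal (G (t, \<tau>)) \<partial>lborel) \<le> ennreal ((b - a) powr (1 - \<alpha>) / (1 - \<alpha>)) * indicator {a..b} t"
    proof (cases "t \<in> {a..b}")
      case True
      have "(\<integral>\<^sup>+\<tau>. ennreal (G (t, \<tau>)) \<partial>lborel) = (\<integral>\<^sup>+\<tau>. ennreal (indicator {a..t} \<tau> * (t - \<tau>) powr (- \<alpha>)) \<partial>lborel)"
        using True by (intro nn_integral_cong) (auto simp: G_def indicator_def)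
      also have "\<dots> = ennreal ((t - a) powr (1 - \<alpha>) / (1 - \<alpha>))"
        using kern_int_ok(2)[OF al] True by auto
      also have "\<dots> \<le> ennreal ((b - a) powr (1 - \<alpha>) / (1 - \<alpha>))"
        using True al by (intro ennreal_leI divide_right_mono powr_mono2) auto
      finally show ?thesis using True by simp
    next
      case False
      then have "\<And>\<tau>. G (t, \<tau>) = 0" by (auto simp: G_def indicator_def)
      then show ?thesis by simp
    qed
  qed
  also have "\<dots> = ennreal ((b - a) powr (1 - \<alpha>) / (1 - \<alpha>)) * ennreal (b - a)"
    using ab by (subst nn_integral_cmult_indicator) auto
  also have "\<dots> < \<infinity>" by (simp add: ennreal_mult_less_top)
  finally have Gint: "integrable (lborel \<Otimes>\<^sub>M lborel) G"
    by (intro integrableI_nonneg) (auto simp: G_def)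
  have Fint: "integrable (lborel \<Otimes>\<^sub>M lborel) (case_prod F)"
  proof (rule Bochner_Integration.integrable_bound[OF integrable_mult_right[OF Gint, of "Mf * Mp"]])
    show "case_prod F \<in> borel_measurable (lborel \<Otimes>\<^sub>M lborel)"
      using Fm by (simp add: case_prod_beta')
    show "AE x in lborel \<Otimes>\<^sub>M lborel. norm (case_prod F x) \<le> norm (Mf * Mp * G x)"
    proof (rule AE_I2, clarify)
      fix t \<tau> :: real
      show "norm (F t \<tau>) \<le> norm (Mf * Mp * G (t, \<tau>))"
      proof (cases "a \<le> \<tau> \<and> \<tau> \<le> t \<and> t \<le> b")
        case True
        have "\<bar>(t - \<tau>) powr (- \<alpha>) * (f t * p \<tau>)\<bar> = (t - \<tau>) powr (- \<alpha>) * (\<bar>f t\<bar> * \<bar>p \<tau>\<bar>)"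
          by (simp add: abs_mult)
        also have "\<dots> \<le> (t - \<tau>) powr (- \<alpha>) * (Mf * Mp)"
          using True fb[of t] pb[of \<tau>] by (intro mult_left_mono mult_mono) auto
        finally show ?thesis using True Mf0 Mp0 by (simp add: F_def G_def abs_mult mult_ac)
      qed (auto simp: F_def G_def)
    qed
  qed
  have inner1: "(\<integral>\<tau>. F t \<tau> \<partial>lborel) = (if t \<in> {a..b} then f t * integral {a..t} (\<lambda>\<tau>. (t - \<tau>) powr (- \<alpha>) * p \<tau>) else 0)" for t
  proof (cases "t \<in> {a..b}")
    case True
    have int: "integrable lborel (\<lambda>\<tau>. F t \<tau>)"
    proof (rule Bochner_Integration.integrable_bound[OF integrable_mult_right[OF kern_int_ok(1)[OF al, of a t], of "Mf * Mp"]])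
      show "(\<lambda>\<tau>. F t \<tau>) \<in> borel_measurable lborel" unfolding F_def by measurable
      show "AE x in lborel. norm (F t x) \<le> norm (Mf * Mp * (indicator {a..t} x * (t - x) powr - \<alpha>))"
      proof (rule AE_I2)
        fix \<tau> :: real
        show "norm (F t \<tau>) \<le> norm (Mf * Mp * (indicator {a..t} \<tau> * (t - \<tau>) powr - \<alpha>))"
        proof (cases "a \<le> \<tau> \<and> \<tau> \<le> t \<and> t \<le> b")
          case True
          have "\<bar>(t - \<tau>) powr (- \<alpha>) * (f t * p \<tau>)\<bar> = (t - \<tau>) powr (- \<alpha>) * (\<bar>f t\<bar> * \<bar>p \<tau>\<bar>)"
            by (simp add: abs_mult)
          also have "\<dots> \<le> (t - \<tau>) powr (- \<alpha>) * (Mf * Mp)"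
            using True fb[of t] pb[of \<tau>] by (intro mult_left_mono mult_mono) auto
          finally show ?thesis using True Mf0 Mp0 by (simp add: F_def abs_mult mult_ac)
        qed (auto simp: F_def)
      qed
    qed (use True in auto)
    have "(\<integral>\<tau>. F t \<tau> \<partial>lborel) = integral UNIV (\<lambda>\<tau>. F t \<tau>)"
      using int by (simp add: integral_lborel)
    also have "\<dots> = integral UNIV (\<lambda>\<tau>. if \<tau> \<in> {a..t} then f t * ((t - \<tau>) powr (- \<alpha>) * p \<tau>) else 0)"
      using True by (intro integral_cong) (auto simp: F_def)
    also have "\<dots> = integral {a..t} (\<lambda>\<tau>. f t * ((t - \<tau>) powr (- \<alpha>) * p \<tau>))"
      by (rule integral_restrict_UNIV)
    also have "\<dots> = f t * integral {a..t} (\<lambda>\<tau>. (t - \<tau>) powr (- \<alpha>) * p \<tau>)"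
      by (rule integral_mult_right)
    finally show ?thesis using True by simp
  next
    case False
    then have "\<And>\<tau>. F t \<tau> = 0" by (auto simp: F_def)
    then show ?thesis using False by auto
  qed
  have inner2: "(\<integral>t. F t \<tau> \<partial>lborel) = (if \<tau> \<in> {a..b} then p \<tau> * integral {\<tau>..b} (\<lambda>t. (t - \<tau>) powr (- \<alpha>) * f t) else 0)" for \<tau>
  proof (cases "\<tau> \<in> {a..b}")
    case True
    have int: "integrable lborel (\<lambda>t. F t \<tau>)"
    proof (rule Bochner_Integration.integrable_bound[OF integrable_mult_right[OF kern_int_ok2[OF al, of \<tau> b], of "Mf * Mp"]])
      show "(\<lambda>t. F t \<tau>) \<in> borel_measurable lborel" unfolding F_def by measurable
      show "AE x in lborel. norm (F x \<tau>) \<le> norm (Mf * Mp * (indicator {\<tau>..b} x * (x - \<tau>) powr - \<alpha>))"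
      proof (rule AE_I2)
        fix t :: real
        show "norm (F t \<tau>) \<le> norm (Mf * Mp * (indicator {\<tau>..b} t * (t - \<tau>) powr - \<alpha>))"
        proof (cases "a \<le> \<tau> \<and> \<tau> \<le> t \<and> t \<le> b")
          case True
          have "\<bar>(t - \<tau>) powr (- \<alpha>) * (f t * p \<tau>)\<bar> = (t - \<tau>) powr (- \<alpha>) * (\<bar>f t\<bar> * \<bar>p \<tau>\<bar>)"
            by (simp add: abs_mult)
          also have "\<dots> \<le> (t - \<tau>) powr (- \<alpha>) * (Mf * Mp)"
            using True fb[of t] pb[of \<tau>] by (intro mult_left_mono mult_mono) auto
          finally show ?thesis using True Mf0 Mp0 by (simp add: F_def abs_mult mult_ac)
        qed (auto simp: F_def)
      qed
    qed (use True in auto)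
    have "(\<integral>t. F t \<tau> \<partial>lborel) = integral UNIV (\<lambda>t. F t \<tau>)"
      using int by (simp add: integral_lborel)
    also have "\<dots> = integral UNIV (\<lambda>t. if t \<in> {\<tau>..b} then p \<tau> * ((t - \<tau>) powr (- \<alpha>) * f t) else 0)"
      using True by (intro integral_cong) (auto simp: F_def)
    also have "\<dots> = integral {\<tau>..b} (\<lambda>t. p \<tau> * ((t - \<tau>) powr (- \<alpha>) * f t))"
      by (rule integral_restrict_UNIV)
    also have "\<dots> = p \<tau> * integral {\<tau>..b} (\<lambda>t. (t - \<tau>) powr (- \<alpha>) * f t)"
      by (rule integral_mult_right)
    finally show ?thesis using True by simp
  next
    case False
    then have "\<And>t. F t \<tau> = 0" by (auto simp: F_def)
    then show ?thesis using False by auto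
  qed
  have i1: "integrable lborel (\<lambda>t. \<integral>\<tau>. F t \<tau> \<partial>lborel)"
    using lborel_pair.integrable_fst'[OF Fint] by simp
  have i2: "integrable lborel (\<lambda>\<tau>. \<integral>t. F t \<tau> \<partial>lborel)"
    using lborel_pair.integrable_snd[OF Fint] by simp
  have "integral {a..b} (\<lambda>t. f t * integral {a..t} (\<lambda>\<tau>. (t - \<tau>) powr (- \<alpha>) * p \<tau>))
      = integral UNIV (\<lambda>t. \<integral>\<tau>. F t \<tau> \<partial>lborel)"
    unfolding inner1 by (rule integral_restrict_UNIV[symmetric])
  also have "\<dots> = (\<integral>t. \<integral>\<tau>. F t \<tau> \<partial>lborel \<partial>lborel)"
    using i1 by (simp add: integral_lborel)
  also have "\<dots> = (\<integral>\<tau>. \<integral>t. F t \<tau> \<partial>lborel \<partial>lborel)"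
    using lborel_pair.Fubini_integral[OF Fint] by simp
  also have "\<dots> = integral UNIV (\<lambda>\<tau>. \<integral>t. F t \<tau> \<partial>lborel)"
    using i2 by (simp add: integral_lborel)
  also have "\<dots> = integral {a..b} (\<lambda>\<tau>. p \<tau> * integral {\<tau>..b} (\<lambda>t. (t - \<tau>) powr (- \<alpha>) * f t))"
    unfolding inner2 by (rule integral_restrict_UNIV)
  finally show ?thesis .
qed


lemma fubini_tri:
  fixes f p :: "real \<Rightarrow> real" and \<alpha> a b :: real
  assumes fc: "continuous_on {a..b} f" and pc: "continuous_on {a..b} p"
    and al: "0 < \<alpha>" "\<alpha> < 1" and ab: "a \<le> b"
  shows "integral {a..b} (\<lambda>t. f t * integral {a..t} (\<lambda>\<tau>. (t - \<tau>) powr (- \<alpha>) * p \<tau>)) =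
         integral {a..b} (\<lambda>\<tau>. p \<tau> * integral {\<tau>..b} (\<lambda>t. (t - \<tau>) powr (- \<alpha>) * f t))"
proof -
  define cl where "cl t = max a (min b t)" for t
  have clc: "continuous_on UNIV cl" unfolding cl_def by (intro continuous_intros)
  have cli: "cl ` UNIV \<subseteq> {a..b}" using ab by (auto simp: cl_def)
  have cle: "t \<in> {a..b} \<Longrightarrow> cl t = t" for t by (auto simp: cl_def)
  have f2: "continuous_on UNIV (f \<circ> cl)" by (rule continuous_on_compose[OF clc continuous_on_subset[OF fc cli]])
  have p2: "continuous_on UNIV (p \<circ> cl)" by (rule continuous_on_compose[OF clc continuous_on_subset[OF pc cli]])
  obtain Mf where Mf0: "\<forall>x\<in>f ` {a..b}. norm x \<le> Mf"
    using compact_imp_bounded[OF compact_continuous_image[OF fc compact_Icc]]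
    unfolding bounded_iff by blast
  then have Mf: "\<And>t. t \<in> {a..b} \<Longrightarrow> \<bar>f t\<bar> \<le> Mf" by auto
  obtain Mp where Mp0: "\<forall>x\<in>p ` {a..b}. norm x \<le> Mp"
    using compact_imp_bounded[OF compact_continuous_image[OF pc compact_Icc]]
    unfolding bounded_iff by blast
  then have Mp: "\<And>t. t \<in> {a..b} \<Longrightarrow> \<bar>p t\<bar> \<le> Mp" by auto
  have main: "integral {a..b} (\<lambda>t. (f \<circ> cl) t * integral {a..t} (\<lambda>\<tau>. (t - \<tau>) powr (- \<alpha>) * (p \<circ> cl) \<tau>)) =
         integral {a..b} (\<lambda>\<tau>. (p \<circ> cl) \<tau> * integral {\<tau>..b} (\<lambda>t. (t - \<tau>) powr (- \<alpha>) * (f \<circ> cl) t))"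
    by (rule fubini_tri_UNIV[OF f2 p2 al ab, of Mf Mp]) (auto simp: cle Mf Mp)
  have e1: "integral {a..b} (\<lambda>t. (f \<circ> cl) t * integral {a..t} (\<lambda>\<tau>. (t - \<tau>) powr (- \<alpha>) * (p \<circ> cl) \<tau>))
    = integral {a..b} (\<lambda>t. f t * integral {a..t} (\<lambda>\<tau>. (t - \<tau>) powr (- \<alpha>) * p \<tau>))"
  proof (rule integral_cong)
    fix t assume t: "t \<in> {a..b}"
    have "integral {a..t} (\<lambda>\<tau>. (t - \<tau>) powr (- \<alpha>) * (p \<circ> cl) \<tau>) = integral {a..t} (\<lambda>\<tau>. (t - \<tau>) powr (- \<alpha>) * p \<tau>)"
      using t by (intro integral_cong) (auto simp: cle)
    then show "(f \<circ> cl) t * integral {a..t} (\<lambda>\<tau>. (t - \<tau>) powr (- \<alpha>) * (p \<circ> cl) \<tau>) = f t * integral {a..t} (\<lambda>\<tau>. (t - \<tau>) powr (- \<alpha>) * p \<tau>)"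
      using t by (simp add: cle)
  qed
  have e2: "integral {a..b} (\<lambda>\<tau>. (p \<circ> cl) \<tau> * integral {\<tau>..b} (\<lambda>t. (t - \<tau>) powr (- \<alpha>) * (f \<circ> cl) t))
    = integral {a..b} (\<lambda>\<tau>. p \<tau> * integral {\<tau>..b} (\<lambda>t. (t - \<tau>) powr (- \<alpha>) * f t))"
  proof (rule integral_cong)
    fix \<tau> assume t: "\<tau> \<in> {a..b}"
    have "integral {\<tau>..b} (\<lambda>t. (t - \<tau>) powr (- \<alpha>) * (f \<circ> cl) t) = integral {\<tau>..b} (\<lambda>t. (t - \<tau>) powr (- \<alpha>) * f t)"
      using t by (intro integral_cong) (auto simp: cle)
    then show "(p \<circ> cl) \<tau> * integral {\<tau>..b} (\<lambda>t. (t - \<tau>) powr (- \<alpha>) * (f \<circ> cl) t) = p \<tau> * integral {\<tau>..b} (\<lambda>t. (t - \<tau>) powr (- \<alpha>) * f t)"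
      using t by (simp add: cle)
  qed
  show ?thesis using main e1 e2 by simp
qed

lemma mono_int:
  fixes \<alpha> a t :: real and m :: nat
  assumes al: "0 < \<alpha>" "\<alpha> < 1" and at: "a \<le> t" and m: "1 \<le> m"
  shows "((\<lambda>\<tau>. (t - \<tau>) powr (- \<alpha>) * (\<tau> - a) ^ (m - 1)) has_integral
           Beta (real m) (1 - \<alpha>) * (t - a) powr (real m - \<alpha>)) {a..t}"
proof (cases "a = t")
  case True then show ?thesis by (simp add: has_integral_refl)
next
  case False
  with at have at': "a < t" by simp
  define B where "B = Beta (real m) (1 - \<alpha>)"
  define G where "G s = s powr (real m - 1) * (1 - s) powr (1 - \<alpha> - 1)" for s :: real
  have hB: "(G has_integral B) (cbox 0 1)"
    unfolding G_def B_def using has_integral_Beta_real[of "real m" "1 - \<alpha>"] al m by simp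
  have aff: "((\<lambda>x. G ((1 / (t - a)) *\<^sub>R x + (- a / (t - a)))) has_integral (1 / (\<bar>1 / (t - a)\<bar> ^ DIM(real))) *\<^sub>R B)
     ((\<lambda>x. (1 / (1 / (t - a))) *\<^sub>R x + -((1 / (1 / (t - a))) *\<^sub>R (- a / (t - a)))) ` cbox 0 1)"
    by (rule has_integral_affinity[OF hB]) (use at' in auto)
  have img: "((\<lambda>x. (1 / (1 / (t - a))) *\<^sub>R x + -((1 / (1 / (t - a))) *\<^sub>R (- a / (t - a)))) ` cbox 0 1) = {a..t}"
  proof -
    have "(\<lambda>x. (1 / (1 / (t - a))) *\<^sub>R x + -((1 / (1 / (t - a))) *\<^sub>R (- a / (t - a)))) = (\<lambda>x. (t - a) * x + a)"
      using at' by (auto simp: field_simps)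
    then show ?thesis using at' by (simp add: image_affinity_atLeastAtMost)
  qed
  have aff2: "((\<lambda>\<tau>. G ((\<tau> - a) / (t - a))) has_integral ((t - a) * B)) {a..t}"
  proof -
    have "(\<lambda>x. G ((1 / (t - a)) *\<^sub>R x + (- a / (t - a)))) = (\<lambda>\<tau>. G ((\<tau> - a) / (t - a)))"
      by (rule ext) (simp add: diff_divide_distrib)
    moreover have "(1 / (\<bar>1 / (t - a)\<bar> ^ DIM(real))) *\<^sub>R B = (t - a) * B" using at' by simp
    moreover have "\<bar>t - a\<bar> = t - a" using at' by simp
    ultimately show ?thesis using aff img by simp
  qed
  have aff3: "((\<lambda>\<tau>. (t - a) powr (real m - 1 - \<alpha>) * G ((\<tau> - a) / (t - a))) has_integral
      ((t - a) powr (real m - 1 - \<alpha>) * ((t - a) * B))) {a..t}"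
    by (rule has_integral_mult_right[OF aff2])
  have val: "(t - a) powr (real m - 1 - \<alpha>) * ((t - a) * B) = B * (t - a) powr (real m - \<alpha>)"
  proof -
    have "(t - a) powr (real m - 1 - \<alpha>) * (t - a) = (t - a) powr (real m - \<alpha>)"
      using powr_add[of "t - a" "real m - 1 - \<alpha>" 1] at' by simp
    then show ?thesis by (simp add: mult_ac)
  qed
  show ?thesis
    unfolding B_def[symmetric]
  proof (rule has_integral_spike[OF negligible_finite[of "{a, t}"] _ aff3[unfolded val]])
    fix \<tau> assume "\<tau> \<in> {a..t} - {a, t}"
    then have \<tau>: "a < \<tau>" "\<tau> < t" by auto
    have q1: "((\<tau> - a) / (t - a)) powr (real m - 1) = (\<tau> - a) powr (real m - 1) / (t - a) powr (real m - 1)"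
      using \<tau> by (simp add: powr_divide)
    have "1 - (\<tau> - a) / (t - a) = (t - \<tau>) / (t - a)" using at' by (simp add: field_simps)
    then have q2: "(1 - (\<tau> - a) / (t - a)) powr (1 - \<alpha> - 1) = (t - \<tau>) powr (- \<alpha>) / (t - a) powr (- \<alpha>)"
      using \<tau> by (simp add: powr_divide)
    have q3: "(\<tau> - a) powr (real m - 1) = (\<tau> - a) ^ (m - 1)"
      using \<tau> m by (simp add: powr_realpow[symmetric] of_nat_diff)
    have q4: "(t - a) powr (real m - 1 - \<alpha>) = (t - a) powr (real m - 1) * (t - a) powr (- \<alpha>)"
      by (simp add: powr_add[symmetric])
    have pos: "(t - a) powr (real m - 1) > 0" "(t - a) powr (- \<alpha>) > 0" using at' by auto
    show "(t - \<tau>) powr (- \<alpha>) * (\<tau> - a) ^ (m - 1) = (t - a) powr (real m - 1 - \<alpha>) * G ((\<tau> - a) / (t - a))"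
      unfolding G_def q1 q2 q3[symmetric] q4 using pos by (simp add: field_simps)
  qed simp
qed


lemma powr_deriv_right:
  fixes a b r t :: real
  assumes r: "1 < r" and t: "t \<in> {a..b}"
  shows "((\<lambda>s. (s - a) powr r) has_real_derivative (r * (t - a) powr (r - 1))) (at t within {a..b})"
proof (cases "a < t")
  case True
  have "((\<lambda>s. (s - a) powr r) has_real_derivative (r * (t - a) powr (r - 1) * (1 - 0))) (at t)"
    using True by (auto intro!: derivative_eq_intros)
  then show ?thesis by (auto intro: has_field_derivative_at_within)
next
  case False
  with t have ta: "t = a" by auto
  have c: "continuous_on {a..b} (\<lambda>s. (s - a) powr (r - 1))"
    using r by (intro continuous_on_powr' continuous_intros) auto
  have "((\<lambda>s. (s - a) powr (r - 1)) \<longlongrightarrow> (a - a) powr (r - 1)) (at a within {a..b})"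
    using c t ta unfolding continuous_on_def by blast
  then have lim: "((\<lambda>s. (s - a) powr (r - 1)) \<longlongrightarrow> 0) (at a within {a..b})" by simp
  have "((\<lambda>y. ((y - a) powr r - (a - a) powr r) / (y - a)) \<longlongrightarrow> 0) (at a within {a..b})"
  proof (rule Lim_transform_within[OF lim zero_less_one])
    fix y assume y: "y \<in> {a..b}" "0 < dist y a" "dist y a < 1"
    then have ya: "y - a > 0" by (auto simp: dist_real_def)
    show "(y - a) powr (r - 1) = ((y - a) powr r - (a - a) powr r) / (y - a)"
      using ya by (simp add: powr_diff)
  qed
  then show ?thesis using ta by (simp add: has_field_derivative_iff)
qed

lemma caputo_poly:
  fixes \<alpha> a t c1 c2 :: real and m1 m2 :: nat
  assumes al: "0 < \<alpha>" "\<alpha> < 1" and at: "a \<le> t" and m: "1 \<le> m1" "1 \<le> m2"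
  shows "caputo_left a \<alpha> (\<lambda>s. c1 * (s - a) ^ m1 + c2 * (s - a) ^ m2) t =
    (c1 * m1 * Beta m1 (1 - \<alpha>) * (t - a) powr (m1 - \<alpha>) + c2 * m2 * Beta m2 (1 - \<alpha>) * (t - a) powr (m2 - \<alpha>)) / Gamma (1 - \<alpha>)"
proof -
  have vd: "vector_derivative (\<lambda>s. c1 * (s - a) ^ m1 + c2 * (s - a) ^ m2) (at \<tau>) =
        c1 * m1 * (\<tau> - a) ^ (m1 - 1) + c2 * m2 * (\<tau> - a) ^ (m2 - 1)" for \<tau>
  proof (rule vector_derivative_at)
    have "((\<lambda>s. c1 * (s - a) ^ m1 + c2 * (s - a) ^ m2) has_real_derivative
        (c1 * (real m1 * (\<tau> - a) ^ (m1 - 1) * (1 - 0)) + c2 * (real m2 * (\<tau> - a) ^ (m2 - 1) * (1 - 0)))) (at \<tau>)"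
      by (auto intro!: derivative_eq_intros)
    then show "((\<lambda>s. c1 * (s - a) ^ m1 + c2 * (s - a) ^ m2) has_vector_derivative
        c1 * m1 * (\<tau> - a) ^ (m1 - 1) + c2 * m2 * (\<tau> - a) ^ (m2 - 1)) (at \<tau>)"
      by (simp add: has_real_derivative_iff_has_vector_derivative mult_ac)
  qed
  have h: "((\<lambda>\<tau>. c1 * m1 * ((t - \<tau>) powr (- \<alpha>) * (\<tau> - a) ^ (m1 - 1)) + c2 * m2 * ((t - \<tau>) powr (- \<alpha>) * (\<tau> - a) ^ (m2 - 1)))
      has_integral (c1 * m1 * (Beta m1 (1 - \<alpha>) * (t - a) powr (m1 - \<alpha>)) + c2 * m2 * (Beta m2 (1 - \<alpha>) * (t - a) powr (m2 - \<alpha>)))) {a..t}"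
    by (intro has_integral_add has_integral_mult_right mono_int al at m)
  have "integral {a..t} (\<lambda>\<tau>. (t - \<tau>) powr (- \<alpha>) * vector_derivative (\<lambda>s. c1 * (s - a) ^ m1 + c2 * (s - a) ^ m2) (at \<tau>))
     = c1 * m1 * (Beta m1 (1 - \<alpha>) * (t - a) powr (m1 - \<alpha>)) + c2 * m2 * (Beta m2 (1 - \<alpha>) * (t - a) powr (m2 - \<alpha>))"
    unfolding vd using integral_unique[OF h] by (simp add: algebra_simps)
  then show ?thesis unfolding caputo_left_def by (simp add: mult_ac)
qed


lemma fund_lemma:
  fixes F :: "real \<Rightarrow> real" and a b :: real
  assumes ab: "a < b" and Fc: "continuous_on {a..b} F"
    and orth: "\<And>i::nat. integral {a..b} (\<lambda>t. F t * ((b - a) * (t - a) ^ (i + 2) - (t - a) ^ (i + 3))) = 0"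
  shows "\<And>t. t \<in> {a..b} \<Longrightarrow> F t = 0"
proof -
  define H where "H t = F t * ((t - a) ^ 2 * (b - t))" for t
  have Hc: "continuous_on {a..b} H" unfolding H_def by (intro continuous_intros Fc)
  have orth2: "integral {a..b} (\<lambda>t. H t * (t - a) ^ i) = 0" for i
  proof -
    have "(\<lambda>t. H t * (t - a) ^ i) = (\<lambda>t. F t * ((b - a) * (t - a) ^ (i + 2) - (t - a) ^ (i + 3)))"
    proof (rule ext)
      fix t :: real
      have e: "(b - a) * u ^ (i + 2) - u ^ (i + 3) = u ^ 2 * ((b - a) - u) * u ^ i" for u :: real
        by (simp add: power_add algebra_simps power2_eq_square power3_eq_cube)
      show "H t * (t - a) ^ i = F t * ((b - a) * (t - a) ^ (i + 2) - (t - a) ^ (i + 3))"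
        unfolding H_def e[of "t - a"] by (simp add: mult_ac)
    qed
    then show ?thesis using orth[of i] by simp
  qed
  have Hint: "(\<lambda>t. H t * g (t - a)) integrable_on {a..b}" if "continuous_on UNIV g" for g
    by (intro integrable_continuous_real continuous_intros Hc continuous_on_compose2[OF that]) auto
  have orth3: "integral {a..b} (\<lambda>t. H t * (\<Sum>i\<le>n. c i * (t - a) ^ i)) = 0" for c n
  proof -
    have "integral {a..b} (\<lambda>t. H t * (\<Sum>i\<le>n. c i * (t - a) ^ i)) = integral {a..b} (\<lambda>t. \<Sum>i\<le>n. c i * (H t * (t - a) ^ i))"
      by (simp add: sum_distrib_left mult_ac)
    also have "\<dots> = (\<Sum>i\<le>n. integral {a..b} (\<lambda>t. c i * (H t * (t - a) ^ i)))"
      by (rule integral_sum) (auto intro!: integrable_continuous_real continuous_intros Hc)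
    also have "\<dots> = 0" by (simp add: orth2)
    finally show ?thesis .
  qed
  obtain MH where MH: "\<forall>x\<in>H ` {a..b}. norm x \<le> MH"
    using compact_imp_bounded[OF compact_continuous_image[OF Hc compact_Icc]]
    unfolding bounded_iff by blast
  have MH': "\<And>t. t \<in> {a..b} \<Longrightarrow> \<bar>H t\<bar> \<le> MH" using MH by auto
  have MH0: "0 \<le> MH" using MH'[of a] ab by auto
  have I2c: "continuous_on {a..b} (\<lambda>t. H t * H t)" by (intro continuous_intros Hc)
  have bnd: "integral {a..b} (\<lambda>t. H t * H t) \<le> MH * e * (b - a)" if e: "e > 0" for e
  proof -
    have Gc: "continuous_on {0..b-a} (\<lambda>s. H (s + a))"
      by (rule continuous_on_compose2[OF Hc]) (auto intro!: continuous_intros)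
    obtain g where g: "real_polynomial_function g" "\<And>s. s \<in> {0..b-a} \<Longrightarrow> \<bar>H (s + a) - g s\<bar> < e"
      using Stone_Weierstrass_real_polynomial_function[OF compact_Icc Gc e] by blast
    obtain c n where gs: "g = (\<lambda>x. \<Sum>i\<le>n. c i * x ^ i)"
      using g(1) real_polynomial_function_iff_sum by blast
    have gint: "(\<lambda>t. H t * g (t - a)) integrable_on {a..b}"
      unfolding gs by (intro integrable_continuous_real continuous_intros Hc)
    have z: "integral {a..b} (\<lambda>t. H t * g (t - a)) = 0" unfolding gs by (rule orth3)
    have "integral {a..b} (\<lambda>t. H t * H t) = integral {a..b} (\<lambda>t. H t * H t) - integral {a..b} (\<lambda>t. H t * g (t - a))"
      using z by simp
    also have "\<dots> = integral {a..b} (\<lambda>t. H t * (H t - g (t - a)))"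
      by (subst integral_diff[symmetric]) (auto intro: gint integrable_continuous_real[OF I2c] simp: algebra_simps)
    also have "\<dots> \<le> MH * e * (b - a)"
    proof -
      have "norm (integral {a..b} (\<lambda>t. H t * (H t - g (t - a)))) \<le> MH * e * measure lborel (cbox a b)"
      proof (rule has_integral_bound[of "MH * e"])
        show "0 \<le> MH * e" using MH0 e by simp
        show "((\<lambda>t. H t * (H t - g (t - a))) has_integral integral {a..b} (\<lambda>t. H t * (H t - g (t - a)))) (cbox a b)"
          unfolding gs by (auto intro!: integrable_integral integrable_continuous_real continuous_intros Hc)
        fix t assume t: "t \<in> cbox a b"
        have "\<bar>H (t - a + a) - g (t - a)\<bar> < e" using g(2)[of "t - a"] t by auto
        then have "\<bar>H t - g (t - a)\<bar> \<le> e" by simp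
        then show "norm (H t * (H t - g (t - a))) \<le> MH * e"
          using MH'[of t] t e by (auto simp: abs_mult intro!: mult_mono)
      qed
      then show ?thesis using ab by simp
    qed
    finally show ?thesis .
  qed
  have I2le: "integral {a..b} (\<lambda>t. H t * H t) \<le> 0"
  proof (rule field_le_epsilon)
    fix e :: real assume e: "e > 0"
    define e' where "e' = e / ((MH + 1) * (b - a))"
    have e': "e' > 0" using e ab MH0 by (simp add: e'_def)
    have "integral {a..b} (\<lambda>t. H t * H t) \<le> MH * e' * (b - a)" by (rule bnd[OF e'])
    also have "\<dots> \<le> (MH + 1) * e' * (b - a)" using e' ab by (intro mult_right_mono) auto
    also have "\<dots> = e" using ab MH0 by (simp add: e'_def)
    finally show "integral {a..b} (\<lambda>t. H t * H t) \<le> 0 + e" by simp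
  qed
  have I2ge: "integral {a..b} (\<lambda>t. H t * H t) \<ge> 0"
    by (intro integral_nonneg integrable_continuous_real I2c) auto
  have "\<forall>x\<in>{a..b}. H x * H x = 0"
    using integral_eq_0_iff[OF I2c ab] I2le I2ge by auto
  then have Fz: "F t = 0" if "t \<in> {a<..<b}" for t
    using that by (auto simp: H_def)
  fix t assume t: "t \<in> {a..b}"
  show "F t = 0"
    by (rule continuous_constant_on_closure[of "{a<..<b}"]) (use Fc Fz ab t in auto)
qed


lemma seg_est:
  fixes L Lt Lz :: "real \<Rightarrow> real^'n \<Rightarrow> real^'n \<Rightarrow> real \<Rightarrow> real"
    and Lx Lv :: "real \<Rightarrow> real^'n \<Rightarrow> real^'n \<Rightarrow> real \<Rightarrow> real^'n"
    and y dy v dv :: "real^'n" and w dw t K :: real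
  assumes L_C1_deriv: "\<forall>t\<in>{a..b}. \<forall>y v w.
         ((\<lambda>(s, y', v', w'). L s y' v' w') has_derivative
            (\<lambda>(ds, dy, dv, dw). Lt t y v w * ds + Lx t y v w \<bullet> dy + Lv t y v w \<bullet> dv + Lz t y v w * dw))
         (at (t, y, v, w) within {a..b} \<times> UNIV)"
    and t: "t \<in> {a..b}" and K: "0 \<le> K"
    and bx: "\<And>s. s \<in> {0..1} \<Longrightarrow> norm (Lx t (y + s *\<^sub>R dy) (v + s *\<^sub>R dv) (w + s * dw) - Lx t y v w) \<le> K"
    and bv: "\<And>s. s \<in> {0..1} \<Longrightarrow> norm (Lv t (y + s *\<^sub>R dy) (v + s *\<^sub>R dv) (w + s * dw) - Lv t y v w) \<le> K"
    and bz: "\<And>s. s \<in> {0..1} \<Longrightarrow> \<bar>Lz t (y + s *\<^sub>R dy) (v + s *\<^sub>R dv) (w + s * dw) - Lz t y v w\<bar> \<le> K"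
  shows "\<bar>L t (y + dy) (v + dv) (w + dw) - L t y v w - (Lx t y v w \<bullet> dy + Lv t y v w \<bullet> dv + Lz t y v w * dw)\<bar>
           \<le> K * (norm dy + norm dv + \<bar>dw\<bar>)"
proof -
  define c where "c = Lx t y v w \<bullet> dy + Lv t y v w \<bullet> dv + Lz t y v w * dw"
  define p where "p s = (t, y + s *\<^sub>R dy, v + s *\<^sub>R dv, w + s * dw)" for s :: real
  define g where "g = (\<lambda>(s, y', v', w'). L s y' v' w')"
  define f where "f s = g (p s) - s * c" for s
  define D where "D s = Lx t (y + s *\<^sub>R dy) (v + s *\<^sub>R dv) (w + s * dw) \<bullet> dy
     + Lv t (y + s *\<^sub>R dy) (v + s *\<^sub>R dv) (w + s * dw) \<bullet> dv + Lz t (y + s *\<^sub>R dy) (v + s *\<^sub>R dv) (w + s * dw) * dw" for s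
  have pd: "(p has_derivative (\<lambda>h. (0, h *\<^sub>R dy, h *\<^sub>R dv, h * dw))) (at s within S)" for s S
    unfolding p_def by (auto intro!: derivative_eq_intros)
  have pS: "p ` S \<subseteq> {a..b} \<times> UNIV" for S using t by (auto simp: p_def)
  define G' where "G' q = (\<lambda>(ds, dy', dv', dw'). Lt (fst q) (fst (snd q)) (fst (snd (snd q))) (snd (snd (snd q))) * ds
           + Lx (fst q) (fst (snd q)) (fst (snd (snd q))) (snd (snd (snd q))) \<bullet> dy'
           + Lv (fst q) (fst (snd q)) (fst (snd (snd q))) (snd (snd (snd q))) \<bullet> dv'
           + Lz (fst q) (fst (snd q)) (fst (snd (snd q))) (snd (snd (snd q))) * dw')" for q :: "real \<times> (real^'n) \<times> (real^'n) \<times> real"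
  have gd: "(g has_derivative G' q) (at q within {a..b} \<times> UNIV)" if "q \<in> {a..b} \<times> UNIV" for q
  proof -
    obtain tq yq vq wq where q: "q = (tq, yq, vq, wq)" by (cases q) auto
    then have "tq \<in> {a..b}" using that by auto
    have "((\<lambda>(s, y', v', w'). L s y' v' w') has_derivative
            (\<lambda>(ds, dy, dv, dw). Lt tq yq vq wq * ds + Lx tq yq vq wq \<bullet> dy + Lv tq yq vq wq \<bullet> dv + Lz tq yq vq wq * dw))
         (at (tq, yq, vq, wq) within {a..b} \<times> UNIV)"
      using L_C1_deriv \<open>tq \<in> {a..b}\<close> by blast
    then show ?thesis unfolding q g_def G'_def by simp
  qed
  have fd: "(f has_derivative (\<lambda>h. h * D s - h * c)) (at s within S)" if "s \<in> S" for s S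
  proof -
    have "((\<lambda>s. g (p s)) has_derivative (\<lambda>h. G' (p s) (0, h *\<^sub>R dy, h *\<^sub>R dv, h * dw))) (at s within S)"
      by (rule has_derivative_in_compose2[OF gd pS that pd])
    moreover have "(\<lambda>h. G' (p s) (0, h *\<^sub>R dy, h *\<^sub>R dv, h * dw)) = (\<lambda>h. h * D s)"
    proof (rule ext)
      fix h
      show "G' (p s) (0, h *\<^sub>R dy, h *\<^sub>R dv, h * dw) = h * D s"
        unfolding G'_def p_def D_def by (simp add: inner_scaleR_right distrib_left)
    qed
    ultimately have "((\<lambda>s. g (p s)) has_derivative (\<lambda>h. h * D s)) (at s within S)" by simp
    then show ?thesis unfolding f_def by (auto intro!: derivative_eq_intros)
  qed
  have fc: "continuous_on {0..1} f"
    using fd by (auto simp: continuous_on_eq_continuous_within intro: has_derivative_continuous)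
  obtain \<xi> where xi: "0 < \<xi>" "\<xi> < 1" "f 1 - f 0 = \<xi> * 0 + (1 - 0) * D \<xi> - (1 - 0) * c"
  proof (rule mvt[OF zero_less_one fc])
    fix s :: real assume "0 < s" "s < 1"
    show "(f has_derivative (\<lambda>h. h * D s - h * c)) (at s)"
      using fd[of s UNIV] by simp
  qed auto
  have f10: "f 1 - f 0 = L t (y + dy) (v + dv) (w + dw) - L t y v w - c"
    by (simp add: f_def g_def p_def)
  have xi01: "\<xi> \<in> {0..1}" using xi by auto
  have "\<bar>D \<xi> - c\<bar> = \<bar>(Lx t (y + \<xi> *\<^sub>R dy) (v + \<xi> *\<^sub>R dv) (w + \<xi> * dw) - Lx t y v w) \<bullet> dy
      + (Lv t (y + \<xi> *\<^sub>R dy) (v + \<xi> *\<^sub>R dv) (w + \<xi> * dw) - Lv t y v w) \<bullet> dv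
      + (Lz t (y + \<xi> *\<^sub>R dy) (v + \<xi> *\<^sub>R dv) (w + \<xi> * dw) - Lz t y v w) * dw\<bar>"
    by (simp add: D_def c_def inner_diff_left algebra_simps)
  also have "\<dots> \<le> \<bar>(Lx t (y + \<xi> *\<^sub>R dy) (v + \<xi> *\<^sub>R dv) (w + \<xi> * dw) - Lx t y v w) \<bullet> dy\<bar>
      + \<bar>(Lv t (y + \<xi> *\<^sub>R dy) (v + \<xi> *\<^sub>R dv) (w + \<xi> * dw) - Lv t y v w) \<bullet> dv\<bar>
      + \<bar>(Lz t (y + \<xi> *\<^sub>R dy) (v + \<xi> *\<^sub>R dv) (w + \<xi> * dw) - Lz t y v w) * dw\<bar>"
    by linarith
  also have "\<dots> \<le> K * norm dy + K * norm dv + K * \<bar>dw\<bar>"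
  proof (intro add_mono)
    show "\<bar>(Lx t (y + \<xi> *\<^sub>R dy) (v + \<xi> *\<^sub>R dv) (w + \<xi> * dw) - Lx t y v w) \<bullet> dy\<bar> \<le> K * norm dy"
      by (rule order_trans[OF Cauchy_Schwarz_ineq2]) (intro mult_right_mono bx xi01, simp)
    show "\<bar>(Lv t (y + \<xi> *\<^sub>R dy) (v + \<xi> *\<^sub>R dv) (w + \<xi> * dw) - Lv t y v w) \<bullet> dv\<bar> \<le> K * norm dv"
      by (rule order_trans[OF Cauchy_Schwarz_ineq2]) (intro mult_right_mono bv xi01, simp)
    show "\<bar>(Lz t (y + \<xi> *\<^sub>R dy) (v + \<xi> *\<^sub>R dv) (w + \<xi> * dw) - Lz t y v w) * dw\<bar> \<le> K * \<bar>dw\<bar>"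
      unfolding abs_mult by (intro mult_right_mono bz xi01) simp
  qed
  finally show ?thesis using xi(3) f10 by (simp add: c_def algebra_simps)
qed

lemma gronwall_like:
  fixes d d' :: "real \<Rightarrow> real" and a T A B \<kappa> :: real
  assumes aT: "a < T" and dc: "continuous_on {a..T} d" and d0: "d a = 0"
    and dd: "\<And>s. a < s \<Longrightarrow> s < T \<Longrightarrow> (d has_real_derivative d' s) (at s)"
    and db: "\<And>s. a < s \<Longrightarrow> s < T \<Longrightarrow> \<bar>d' s\<bar> \<le> A + B * \<bar>d s\<bar>"
    and A: "0 \<le> A" and B: "0 \<le> B" and k: "0 < \<kappa>"
  shows "\<bar>d T\<bar> \<le> exp (B * (T - a)) * (\<kappa> + A * (T - a))"
proof -
  define q where "q s = sqrt ((d s)\<^sup>2 + \<kappa>\<^sup>2)" for s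
  have qpos: "q s > 0" for s unfolding q_def using k by (intro real_sqrt_gt_zero) (simp add: add_nonneg_pos)
  have qge: "\<bar>d s\<bar> \<le> q s" for s unfolding q_def by (rule real_le_rsqrt) simp
  define ch where "ch s = exp (- B * (s - a)) * q s - A * (s - a)" for s
  define ch' where "ch' s = exp (- B * (s - a)) * (- B) * q s + (d s * d' s / q s) * exp (- B * (s - a)) - A" for s
  have qc: "continuous_on {a..T} q" unfolding q_def by (intro continuous_intros dc)
  have chc: "continuous_on {a..T} ch" unfolding ch_def by (intro continuous_intros qc)
  have chd: "(ch has_real_derivative ch' s) (at s)" if "a < s" "s < T" for s
  proof -
    have d1: "((\<lambda>s. (d s)\<^sup>2 + \<kappa>\<^sup>2) has_real_derivative (of_nat 2 * (d' s * d s ^ (2 - Suc 0)) + 0)) (at s)"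
      by (rule DERIV_add[OF DERIV_power[OF dd[OF that]] DERIV_const])
    have sq: "DERIV sqrt ((d s)\<^sup>2 + \<kappa>\<^sup>2) :> inverse (sqrt ((d s)\<^sup>2 + \<kappa>\<^sup>2)) / 2"
      by (rule DERIV_real_sqrt) (use qpos[of s] in \<open>simp add: q_def\<close>)
    have "(q has_real_derivative (inverse (sqrt ((d s)\<^sup>2 + \<kappa>\<^sup>2)) / 2 * (of_nat 2 * (d' s * d s ^ (2 - Suc 0)) + 0))) (at s)"
      unfolding q_def by (rule DERIV_chain2[OF sq d1])
    moreover have "inverse (sqrt ((d s)\<^sup>2 + \<kappa>\<^sup>2)) / 2 * (of_nat 2 * (d' s * d s ^ (2 - Suc 0)) + 0) = d s * d' s / q s"
    proof -
      have gen: "inverse X / 2 * (of_nat 2 * (y * z ^ (2 - Suc 0)) + 0) = z * y / X" for X y z :: real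
      proof -
        have "of_nat 2 * (y * z ^ (2 - Suc 0)) + 0 = 2 * (y * z)" by simp
        then show ?thesis by (simp add: inverse_eq_divide)
      qed
      show ?thesis unfolding gen q_def ..
    qed
    ultimately have qd: "(q has_real_derivative d s * d' s / q s) (at s)" by simp
    have ed: "((\<lambda>s. exp (- B * (s - a))) has_real_derivative exp (- B * (s - a)) * (- B)) (at s)"
      by (auto intro!: derivative_eq_intros)
    have "((\<lambda>s. exp (- B * (s - a)) * q s) has_real_derivative
        exp (- B * (s - a)) * (- B) * q s + (d s * d' s / q s) * exp (- B * (s - a))) (at s)"
      using DERIV_mult[OF ed qd] .
    moreover have "((\<lambda>s. A * (s - a)) has_real_derivative A) (at s)"
      by (auto intro!: derivative_eq_intros)
    ultimately show ?thesis unfolding ch_def ch'_def by (rule DERIV_diff)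
  qed
  have ch'le: "ch' s \<le> 0" if "a < s" "s < T" for s
  proof -
    have "d s * d' s / q s \<le> \<bar>d' s\<bar>"
    proof -
      have "d s * d' s / q s \<le> \<bar>d s\<bar> * \<bar>d' s\<bar> / q s"
        using qpos[of s] by (intro divide_right_mono) (auto simp: abs_mult intro: abs_ge_self[THEN order_trans])
      also have "\<dots> \<le> q s * \<bar>d' s\<bar> / q s"
        using qpos[of s] qge[of s] by (intro divide_right_mono mult_right_mono) auto
      finally show ?thesis using qpos[of s] by simp
    qed
    also have "\<dots> \<le> A + B * q s" using db[OF that] mult_left_mono[OF qge[of s] B] by linarith
    finally have h: "d s * d' s / q s - B * q s \<le> A" by simp
    have e1: "exp (- B * (s - a)) \<le> 1" using that B by (simp add: mult_nonneg_nonneg)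
    have "ch' s = exp (- B * (s - a)) * (d s * d' s / q s - B * q s) - A"
      by (simp add: ch'_def algebra_simps)
    also have "\<dots> \<le> exp (- B * (s - a)) * A - A"
      using h by (intro diff_right_mono mult_left_mono) auto
    also have "\<dots> \<le> 1 * A - A" using e1 A by (intro diff_right_mono mult_right_mono) auto
    finally show ?thesis by simp
  qed
  obtain \<xi> where xi: "a < \<xi>" "\<xi> < T" "ch T - ch a = (*) (ch' \<xi>) (T - a)"
  proof (rule mvt[OF aT chc])
    fix s assume "a < s" "s < T"
    then show "(ch has_derivative (*) (ch' s)) (at s)"
      using chd by (simp add: has_field_derivative_def)
  qed auto
  have "ch' \<xi> * (T - a) \<le> 0" using ch'le[of \<xi>] xi aT by (intro mult_nonpos_nonneg) auto
  then have "ch T \<le> ch a" using xi by simp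
  moreover have "ch a = \<kappa>" using k by (simp add: ch_def q_def d0)
  ultimately have "exp (- B * (T - a)) * q T \<le> \<kappa> + A * (T - a)" by (simp add: ch_def)
  then have f1: "exp (B * (T - a)) * (exp (- B * (T - a)) * q T) \<le> exp (B * (T - a)) * (\<kappa> + A * (T - a))"
    by (intro mult_left_mono) auto
  have f2: "exp (B * (T - a)) * (exp (- B * (T - a)) * q T) = q T"
  proof -
    have "exp (B * (T - a)) * exp (- B * (T - a)) = 1" by (simp add: exp_add[symmetric])
    then show ?thesis by (simp add: mult.assoc[symmetric])
  qed
  have "q T \<le> exp (B * (T - a)) * (\<kappa> + A * (T - a))" using f1 f2 by linarith
  then show ?thesis using qge[of T] by simp
qed


lemma cont_fst_comp:
  fixes h :: "real \<Rightarrow> 'b::topological_space"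
  shows "continuous_on S h \<Longrightarrow> continuous_on (S \<times> Y) (\<lambda>p. h (fst p))"
  by (rule continuous_on_compose2[OF _ continuous_on_fst]) auto

lemma norm_quad_le:
  fixes u v :: "'a::real_normed_vector" and w :: real and z :: real
  shows "norm (z, u, v, w) \<le> \<bar>z\<bar> + norm u + norm v + \<bar>w\<bar>"
proof -
  have "norm (z, u, v, w) \<le> norm z + norm (u, v, w)" by (rule norm_Pair_le)
  also have "norm (u, v, w) \<le> norm u + norm (v, w)" by (rule norm_Pair_le)
  also have "norm (v, w) \<le> norm v + norm w" by (rule norm_Pair_le)
  finally show ?thesis by simp
qed

lemma variation:
  fixes a b za \<delta> :: real
    and L Lt Lz :: "real \<Rightarrow> real^'n \<Rightarrow> real^'n \<Rightarrow> real \<Rightarrow> real"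
    and Lx Lv :: "real \<Rightarrow> real^'n \<Rightarrow> real^'n \<Rightarrow> real \<Rightarrow> real^'n"
    and X V \<eta> E :: "real \<Rightarrow> real^'n" and zf :: "real \<Rightarrow> real \<Rightarrow> real"
  assumes ab: "a < b"
    and L_C1_deriv: "\<forall>t\<in>{a..b}. \<forall>y v w.
         ((\<lambda>(s, y', v', w'). L s y' v' w') has_derivative
            (\<lambda>(ds, dy, dv, dw). Lt t y v w * ds + Lx t y v w \<bullet> dy + Lv t y v w \<bullet> dv + Lz t y v w * dw))
         (at (t, y, v, w) within {a..b} \<times> UNIV)"
    and cLx: "continuous_on ({a..b} \<times> UNIV) (\<lambda>(t, y, v, w). Lx t y v w)"
    and cLv: "continuous_on ({a..b} \<times> UNIV) (\<lambda>(t, y, v, w). Lv t y v w)"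
    and cLz: "continuous_on ({a..b} \<times> UNIV) (\<lambda>(t, y, v, w). Lz t y v w)"
    and cX: "continuous_on {a..b} X" and cV: "continuous_on {a..b} V"
    and c\<eta>: "continuous_on {a..b} \<eta>" and cE: "continuous_on {a..b} E"
    and \<delta>: "0 < \<delta>"
    and sol0: "\<And>e. \<bar>e\<bar> < \<delta> \<Longrightarrow> zf e a = za"
    and sol: "\<And>e t. \<bar>e\<bar> < \<delta> \<Longrightarrow> t \<in> {a..b} \<Longrightarrow>
        (zf e has_real_derivative L t (X t + e *\<^sub>R \<eta> t) (V t + e *\<^sub>R E t) (zf e t)) (at t within {a..b})"
    and d0: "((\<lambda>e. zf e b) has_real_derivative 0) (at 0)"
  shows "integral {a..b} (\<lambda>t. exp (- integral {a..t} (\<lambda>\<tau>. Lz \<tau> (X \<tau>) (V \<tau>) (zf 0 \<tau>))) *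
            (Lx t (X t) (V t) (zf 0 t) \<bullet> \<eta> t + Lv t (X t) (V t) (zf 0 t) \<bullet> E t)) = 0"
proof -
  define z0 where "z0 = zf 0"
  have z0d: "(z0 has_real_derivative L t (X t) (V t) (z0 t)) (at t within {a..b})" if "t \<in> {a..b}" for t
    using sol[of 0 t] \<delta> that by (simp add: z0_def)
  have zfc: "continuous_on {a..b} (zf e)" if "\<bar>e\<bar> < \<delta>" for e
    unfolding continuous_on_eq_continuous_within using DERIV_continuous[OF sol[OF that]] by blast
  have z0c: "continuous_on {a..b} z0" using zfc[of 0] \<delta> by (simp add: z0_def)
  define Lx' where "Lx' = (\<lambda>(t, y, v, w). Lx t y v w)"
  define Lv' where "Lv' = (\<lambda>(t, y, v, w). Lv t y v w)"
  define Lz' where "Lz' = (\<lambda>(t, y, v, w). Lz t y v w)"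
  define Lx0 where "Lx0 t = Lx t (X t) (V t) (z0 t)" for t
  define Lv0 where "Lv0 t = Lv t (X t) (V t) (z0 t)" for t
  define Lz0 where "Lz0 t = Lz t (X t) (V t) (z0 t)" for t
  have curve: "continuous_on {a..b} (\<lambda>t. (t, X t, V t, z0 t))" by (intro continuous_intros cX cV z0c)
  have cLx0: "continuous_on {a..b} Lx0"
  proof -
    have "continuous_on {a..b} (\<lambda>t. Lx' (t, X t, V t, z0 t))"
      by (rule continuous_on_compose2[OF cLx[folded Lx'_def] curve]) auto
    then show ?thesis by (simp add: Lx'_def Lx0_def)
  qed
  have cLv0: "continuous_on {a..b} Lv0"
  proof -
    have "continuous_on {a..b} (\<lambda>t. Lv' (t, X t, V t, z0 t))"
      by (rule continuous_on_compose2[OF cLv[folded Lv'_def] curve]) auto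
    then show ?thesis by (simp add: Lv'_def Lv0_def)
  qed
  have cLz0: "continuous_on {a..b} Lz0"
  proof -
    have "continuous_on {a..b} (\<lambda>t. Lz' (t, X t, V t, z0 t))"
      by (rule continuous_on_compose2[OF cLz[folded Lz'_def] curve]) auto
    then show ?thesis by (simp add: Lz'_def Lz0_def)
  qed
  define lam where "lam t = exp (- integral {a..t} Lz0)" for t
  have lamd: "(lam has_real_derivative (- lam t * Lz0 t)) (at t within {a..b})" if "t \<in> {a..b}" for t
  proof -
    have Id: "((\<lambda>u. integral {a..u} Lz0) has_real_derivative Lz0 t) (at t within {a..b})"
      using integral_has_vector_derivative[OF cLz0 that] by (simp add: has_real_derivative_iff_has_vector_derivative)
    show ?thesis unfolding lam_def
      by (auto intro!: derivative_eq_intros Id)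
  qed
  have lamc: "continuous_on {a..b} lam"
    unfolding continuous_on_eq_continuous_within using DERIV_continuous[OF lamd] by blast
  have lampos: "lam t > 0" for t by (simp add: lam_def)
  obtain \<Lambda> where \<Lambda>: "\<And>t. t \<in> {a..b} \<Longrightarrow> lam t \<le> \<Lambda>"
  proof -
    obtain B where "\<forall>x\<in>lam ` {a..b}. norm x \<le> B"
      using compact_imp_bounded[OF compact_continuous_image[OF lamc compact_Icc]] unfolding bounded_iff by blast
    then have "\<And>t. t \<in> {a..b} \<Longrightarrow> lam t \<le> B" by (auto simp: abs_le_iff)
    then show ?thesis by (rule that)
  qed
  have \<Lambda>pos: "\<Lambda> > 0" using \<Lambda>[of a] lampos[of a] ab by auto
  obtain N where N: "\<And>t. t \<in> {a..b} \<Longrightarrow> norm (\<eta> t) + norm (E t) \<le> N"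
  proof -
    have "continuous_on {a..b} (\<lambda>t. norm (\<eta> t) + norm (E t))" by (intro continuous_intros c\<eta> cE)
    from compact_imp_bounded[OF compact_continuous_image[OF this compact_Icc]]
    obtain B where "\<forall>x\<in>(\<lambda>t. norm (\<eta> t) + norm (E t)) ` {a..b}. norm x \<le> B" unfolding bounded_iff by blast
    then have "\<And>t. t \<in> {a..b} \<Longrightarrow> norm (\<eta> t) + norm (E t) \<le> B" by (auto simp: abs_le_iff)
    then show ?thesis by (rule that)
  qed
  have N0: "0 \<le> N" using N[of a] ab by (smt (verit) atLeastAtMost_iff norm_ge_zero)
  define \<Phi> where "\<Phi> p = (fst p, X (fst p) + fst (snd p) *\<^sub>R \<eta> (fst p), V (fst p) + fst (snd p) *\<^sub>R E (fst p), z0 (fst p) + snd (snd p))"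
    for p :: "real \<times> real \<times> real"
  define C where "C = \<Phi> ` ({a..b} \<times> {-1..1} \<times> {-1..1})"
  have \<Phi>c: "continuous_on ({a..b} \<times> {-1..1} \<times> {-1..1}) \<Phi>"
    unfolding \<Phi>_def
    by (intro continuous_intros cont_fst_comp cX cV c\<eta> cE z0c)
  have Ccomp: "compact C" unfolding C_def
    by (intro compact_continuous_image \<Phi>c compact_Times compact_Icc)
  have CD: "C \<subseteq> {a..b} \<times> UNIV" unfolding C_def \<Phi>_def by auto
  have inC: "(t, X t + e *\<^sub>R \<eta> t, V t + e *\<^sub>R E t, z0 t + r) \<in> C"
    if "t \<in> {a..b}" "\<bar>e\<bar> \<le> 1" "\<bar>r\<bar> \<le> 1" for t e r
    unfolding C_def by (rule image_eqI[where x = "(t, e, r)"]) (use that in \<open>auto simp: \<Phi>_def\<close>)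
  have inC0: "(t, X t, V t, z0 t) \<in> C" if "t \<in> {a..b}" for t
    using inC[OF that, of 0 0] by simp
  have cLxC: "continuous_on C Lx'" by (rule continuous_on_subset[OF cLx[folded Lx'_def] CD])
  have cLvC: "continuous_on C Lv'" by (rule continuous_on_subset[OF cLv[folded Lv'_def] CD])
  have cLzC: "continuous_on C Lz'" by (rule continuous_on_subset[OF cLz[folded Lz'_def] CD])
  obtain M where M0: "0 \<le> M" and Mb: "\<And>p. p \<in> C \<Longrightarrow> norm (Lx' p) \<le> M \<and> norm (Lv' p) \<le> M \<and> \<bar>Lz' p\<bar> \<le> M"
  proof -
    obtain B1 where B1: "\<forall>x\<in>Lx' ` C. norm x \<le> B1"
      using compact_imp_bounded[OF compact_continuous_image[OF cLxC Ccomp]] unfolding bounded_iff by blast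
    obtain B2 where B2: "\<forall>x\<in>Lv' ` C. norm x \<le> B2"
      using compact_imp_bounded[OF compact_continuous_image[OF cLvC Ccomp]] unfolding bounded_iff by blast
    obtain B3 where B3: "\<forall>x\<in>Lz' ` C. norm x \<le> B3"
      using compact_imp_bounded[OF compact_continuous_image[OF cLzC Ccomp]] unfolding bounded_iff by blast
    show ?thesis
      by (rule that[of "max 0 (max B1 (max B2 B3))"]) (use B1 B2 B3 in \<open>force+\<close>)
  qed
  define Le where "Le e t = L t (X t + e *\<^sub>R \<eta> t) (V t + e *\<^sub>R E t) (zf e t)" for e t
  define de where "de e t = zf e t - z0 t" for e t
  have Le0: "Le 0 t = L t (X t) (V t) (z0 t)" for t by (simp add: Le_def z0_def)
  have est: "\<bar>Le e t - Le 0 t - (Lx0 t \<bullet> (e *\<^sub>R \<eta> t) + Lv0 t \<bullet> (e *\<^sub>R E t) + Lz0 t * de e t)\<bar>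
       \<le> K * (norm (e *\<^sub>R \<eta> t) + norm (e *\<^sub>R E t) + \<bar>de e t\<bar>)"
    if t: "t \<in> {a..b}" and K: "0 \<le> K"
      and bs: "\<And>s. s \<in> {0..1} \<Longrightarrow>
           norm (Lx' (t, X t + (s * e) *\<^sub>R \<eta> t, V t + (s * e) *\<^sub>R E t, z0 t + s * de e t) - Lx0 t) \<le> K \<and>
           norm (Lv' (t, X t + (s * e) *\<^sub>R \<eta> t, V t + (s * e) *\<^sub>R E t, z0 t + s * de e t) - Lv0 t) \<le> K \<and>
           \<bar>Lz' (t, X t + (s * e) *\<^sub>R \<eta> t, V t + (s * e) *\<^sub>R E t, z0 t + s * de e t) - Lz0 t\<bar> \<le> K"
    for e t K
  proof -
    have "\<bar>L t (X t + e *\<^sub>R \<eta> t) (V t + e *\<^sub>R E t) (z0 t + de e t) - L t (X t) (V t) (z0 t)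
       - (Lx t (X t) (V t) (z0 t) \<bullet> (e *\<^sub>R \<eta> t) + Lv t (X t) (V t) (z0 t) \<bullet> (e *\<^sub>R E t) + Lz t (X t) (V t) (z0 t) * de e t)\<bar>
       \<le> K * (norm (e *\<^sub>R \<eta> t) + norm (e *\<^sub>R E t) + \<bar>de e t\<bar>)"
      by (rule seg_est[OF L_C1_deriv t K]) (use bs in \<open>auto simp: Lx'_def Lv'_def Lz'_def Lx0_def Lv0_def Lz0_def\<close>)
    then show ?thesis by (simp add: Le_def de_def Lx0_def Lv0_def Lz0_def z0_def)
  qed
  have crude: "\<bar>Le e t - Le 0 t\<bar> \<le> 3 * M * (\<bar>e\<bar> * N + \<bar>de e t\<bar>)"
    if t: "t \<in> {a..b}" and e: "\<bar>e\<bar> \<le> 1" and d: "\<bar>de e t\<bar> \<le> 1" for e t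
  proof -
    have segC: "(t, X t + (s * e) *\<^sub>R \<eta> t, V t + (s * e) *\<^sub>R E t, z0 t + s * de e t) \<in> C" if "s \<in> {0..1}" for s
    proof (rule inC[OF t])
      show "\<bar>s * e\<bar> \<le> 1" using that e by (auto simp: abs_mult intro: mult_le_one)
      show "\<bar>s * de e t\<bar> \<le> 1" using that d by (auto simp: abs_mult intro: mult_le_one)
    qed
    have b0: "norm (Lx0 t) \<le> M" "norm (Lv0 t) \<le> M" "\<bar>Lz0 t\<bar> \<le> M"
      using Mb[OF inC0[OF t]] by (auto simp: Lx'_def Lv'_def Lz'_def Lx0_def Lv0_def Lz0_def)
    have E1: "\<bar>Le e t - Le 0 t - (Lx0 t \<bullet> (e *\<^sub>R \<eta> t) + Lv0 t \<bullet> (e *\<^sub>R E t) + Lz0 t * de e t)\<bar>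
       \<le> (2 * M) * (norm (e *\<^sub>R \<eta> t) + norm (e *\<^sub>R E t) + \<bar>de e t\<bar>)"
    proof (rule est[OF t])
      show "0 \<le> 2 * M" using M0 by simp
      fix s :: real assume s: "s \<in> {0..1}"
      note m = Mb[OF segC[OF s]]
      show "norm (Lx' (t, X t + (s * e) *\<^sub>R \<eta> t, V t + (s * e) *\<^sub>R E t, z0 t + s * de e t) - Lx0 t) \<le> 2 * M \<and>
           norm (Lv' (t, X t + (s * e) *\<^sub>R \<eta> t, V t + (s * e) *\<^sub>R E t, z0 t + s * de e t) - Lv0 t) \<le> 2 * M \<and>
           \<bar>Lz' (t, X t + (s * e) *\<^sub>R \<eta> t, V t + (s * e) *\<^sub>R E t, z0 t + s * de e t) - Lz0 t\<bar> \<le> 2 * M"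
        using m b0 by (auto intro: norm_triangle_le_diff[THEN order_trans] simp: norm_triangle_ineq4)
    qed
    have E2: "\<bar>Lx0 t \<bullet> (e *\<^sub>R \<eta> t) + Lv0 t \<bullet> (e *\<^sub>R E t) + Lz0 t * de e t\<bar>
        \<le> M * (norm (e *\<^sub>R \<eta> t) + norm (e *\<^sub>R E t) + \<bar>de e t\<bar>)"
    proof -
      have "\<bar>Lx0 t \<bullet> (e *\<^sub>R \<eta> t)\<bar> \<le> M * norm (e *\<^sub>R \<eta> t)"
        by (rule order_trans[OF Cauchy_Schwarz_ineq2]) (intro mult_right_mono b0, simp)
      moreover have "\<bar>Lv0 t \<bullet> (e *\<^sub>R E t)\<bar> \<le> M * norm (e *\<^sub>R E t)"
        by (rule order_trans[OF Cauchy_Schwarz_ineq2]) (intro mult_right_mono b0, simp)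
      moreover have "\<bar>Lz0 t * de e t\<bar> \<le> M * \<bar>de e t\<bar>"
        unfolding abs_mult by (intro mult_right_mono b0) simp
      ultimately show ?thesis by (simp add: distrib_left) linarith
    qed
    have nn: "norm (e *\<^sub>R \<eta> t) + norm (e *\<^sub>R E t) \<le> \<bar>e\<bar> * N"
      using N[OF t] by (simp add: distrib_left[symmetric] mult_left_mono)
    have "\<bar>Le e t - Le 0 t\<bar> \<le> 3 * M * (norm (e *\<^sub>R \<eta> t) + norm (e *\<^sub>R E t) + \<bar>de e t\<bar>)"
      using E1 E2 by linarith
    also have "\<dots> \<le> 3 * M * (\<bar>e\<bar> * N + \<bar>de e t\<bar>)"
      using nn M0 by (intro mult_left_mono) auto
    finally show ?thesis .
  qed
  have deC: "continuous_on {a..b} (de e)" if "\<bar>e\<bar> < \<delta>" for e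
    unfolding de_def by (intro continuous_intros zfc[OF that] z0c)
  have de_a: "de e a = 0" if "\<bar>e\<bar> < \<delta>" for e
    using sol0[OF that] sol0[of 0] \<delta> by (simp add: de_def z0_def)
  have dew: "(de e has_real_derivative Le e t - Le 0 t) (at t within {a..b})" if "\<bar>e\<bar> < \<delta>" "t \<in> {a..b}" for e t
    unfolding de_def Le0 unfolding Le_def using DERIV_diff[OF sol[OF that] z0d[OF that(2)]] by simp
  have dd: "(de e has_real_derivative Le e s - Le 0 s) (at s)" if "\<bar>e\<bar> < \<delta>" "a < s" "s < b" for e s
  proof -
    have "at s within {a..b} = at s" using that by (intro at_within_Icc_at) auto
    then show ?thesis using dew[OF that(1), of s] that by simp
  qed
  define C1 where "C1 = exp (3 * M * (b - a)) * (1 + 3 * M * N * (b - a))"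
  have C1pos: "C1 > 0" unfolding C1_def using M0 N0 ab by (intro mult_pos_pos) (auto intro!: add_pos_nonneg)
  have gT: "\<bar>de e T\<bar> \<le> C1 * \<bar>e\<bar>"
    if e: "e \<noteq> 0" "\<bar>e\<bar> < \<delta>" "\<bar>e\<bar> \<le> 1" and T: "a < T" "T \<le> b"
      and sm: "\<And>s. a < s \<Longrightarrow> s < T \<Longrightarrow> \<bar>de e s\<bar> \<le> 1" for e T
  proof -
    have "\<bar>de e T\<bar> \<le> exp ((3 * M) * (T - a)) * (\<bar>e\<bar> + (3 * M * N * \<bar>e\<bar>) * (T - a))"
    proof (rule gronwall_like[where d' = "\<lambda>s. Le e s - Le 0 s"])
      show "a < T" by fact
      show "continuous_on {a..T} (de e)" by (rule continuous_on_subset[OF deC[OF e(2)]]) (use T in auto)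
      show "de e a = 0" by (rule de_a[OF e(2)])
      fix s assume s: "a < s" "s < T"
      show "(de e has_real_derivative Le e s - Le 0 s) (at s)" using dd[OF e(2) s(1)] s T by simp
      have "\<bar>Le e s - Le 0 s\<bar> \<le> 3 * M * (\<bar>e\<bar> * N + \<bar>de e s\<bar>)"
        by (rule crude) (use s T e sm[OF s] in auto)
      then show "\<bar>Le e s - Le 0 s\<bar> \<le> 3 * M * N * \<bar>e\<bar> + 3 * M * \<bar>de e s\<bar>"
        by (simp add: algebra_simps)
    qed (use M0 N0 e in auto)
    also have "\<dots> \<le> exp (3 * M * (b - a)) * (\<bar>e\<bar> * (1 + 3 * M * N * (b - a)))"
    proof (rule mult_mono)
      show "exp (3 * M * (T - a)) \<le> exp (3 * M * (b - a))" using T M0 by (auto intro: mult_left_mono)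
      have "3 * M * N * \<bar>e\<bar> * (T - a) \<le> 3 * M * N * \<bar>e\<bar> * (b - a)"
        using T M0 N0 by (intro mult_left_mono) auto
      then show "\<bar>e\<bar> + 3 * M * N * \<bar>e\<bar> * (T - a) \<le> \<bar>e\<bar> * (1 + 3 * M * N * (b - a))"
        by (simp add: algebra_simps)
    qed (use M0 N0 T in auto)
    also have "\<dots> = C1 * \<bar>e\<bar>" by (simp add: C1_def mult_ac)
    finally show ?thesis .
  qed
  have allsmall: "\<bar>de e t\<bar> < 1" if e: "e \<noteq> 0" "\<bar>e\<bar> < \<delta>" "\<bar>e\<bar> \<le> 1" "C1 * \<bar>e\<bar> < 1" and t: "t \<in> {a..b}" for e t
  proof (rule ccontr)
    assume nt: "\<not> \<bar>de e t\<bar> < 1"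
    define S where "S = {a..b} \<inter> (\<lambda>t. \<bar>de e t\<bar>) -` {1..}"
    have tS: "t \<in> S" using nt t by (auto simp: S_def)
    have Scl: "closed S" unfolding S_def
      by (intro continuous_closed_preimage continuous_intros deC[OF e(2)] closed_atLeast closed_atLeastAtMost)
    have Sbdd: "bdd_below S" unfolding S_def by (rule bdd_belowI[of _ a]) auto
    define T where "T = Inf S"
    have TS: "T \<in> S" unfolding T_def using closed_contains_Inf[OF _ Sbdd Scl] tS by blast
    have Tab: "T \<in> {a..b}" and T1: "1 \<le> \<bar>de e T\<bar>" using TS by (auto simp: S_def)
    have Ta: "a < T" using Tab T1 de_a[OF e(2)] by (cases "T = a") auto
    have sm: "\<bar>de e s\<bar> \<le> 1" if "a < s" "s < T" for s
    proof -
      have "s \<notin> S" using cInf_lower[OF _ Sbdd, of s] that by (auto simp: T_def)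
      then show ?thesis using that Tab by (auto simp: S_def)
    qed
    have "\<bar>de e T\<bar> \<le> C1 * \<bar>e\<bar>" by (rule gT[OF e(1-3) Ta]) (use Tab sm in auto)
    then show False using T1 e(4) by simp
  qed
  have gron: "\<bar>de e t\<bar> \<le> C1 * \<bar>e\<bar>" if e: "e \<noteq> 0" "\<bar>e\<bar> < \<delta>" "\<bar>e\<bar> \<le> 1" "C1 * \<bar>e\<bar> < 1" and t: "t \<in> {a..b}" for e t
  proof (cases "t = a")
    case True then show ?thesis using de_a[OF e(2)] C1pos by simp
  next
    case False
    then show ?thesis
      by (intro gT[OF e(1-3)]) (use t allsmall[OF e] in \<open>auto simp: less_imp_le\<close>)
  qed
  define Q where "Q t = Lx0 t \<bullet> \<eta> t + Lv0 t \<bullet> E t" for t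
  define I where "I = integral {a..b} (\<lambda>t. lam t * Q t)"
  have cQ: "continuous_on {a..b} Q" unfolding Q_def by (intro continuous_intros cLx0 cLv0 c\<eta> cE)
  have Lz0eq: "Lz0 = (\<lambda>\<tau>. Lz \<tau> (X \<tau>) (V \<tau>) (zf 0 \<tau>))" by (rule ext) (simp add: Lz0_def z0_def)
  have goal_eq: "integral {a..b} (\<lambda>t. exp (- integral {a..t} (\<lambda>\<tau>. Lz \<tau> (X \<tau>) (V \<tau>) (zf 0 \<tau>))) *
            (Lx t (X t) (V t) (zf 0 t) \<bullet> \<eta> t + Lv t (X t) (V t) (zf 0 t) \<bullet> E t)) = I"
    unfolding I_def lam_def Q_def Lz0eq by (simp add: Lx0_def Lv0_def z0_def)
  have "I = 0"
  proof (rule ccontr)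
    assume I0: "I \<noteq> 0"
    define \<gamma> where "\<gamma> = \<bar>I\<bar> / (4 * (\<Lambda> * (b - a) * (N + C1) + 1))"
    have Kpos: "\<Lambda> * (b - a) * (N + C1) \<ge> 0" using \<Lambda>pos ab N0 C1pos by simp
    have \<gamma>pos: "\<gamma> > 0" unfolding \<gamma>_def using I0 Kpos by (intro divide_pos_pos) auto
    have \<gamma>le: "\<Lambda> * \<gamma> * (N + C1) * (b - a) \<le> \<bar>I\<bar> / 4"
    proof -
      have "\<Lambda> * \<gamma> * (N + C1) * (b - a) = \<bar>I\<bar> / 4 * ((\<Lambda> * (b - a) * (N + C1)) / (\<Lambda> * (b - a) * (N + C1) + 1))"
        unfolding \<gamma>_def by (simp add: field_simps)
      also have "\<dots> \<le> \<bar>I\<bar> / 4 * 1" using Kpos by (intro mult_left_mono) auto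
      finally show ?thesis by simp
    qed
    have ucx: "uniformly_continuous_on C Lx'" by (rule compact_uniformly_continuous[OF cLxC Ccomp])
    have ucv: "uniformly_continuous_on C Lv'" by (rule compact_uniformly_continuous[OF cLvC Ccomp])
    have ucz: "uniformly_continuous_on C Lz'" by (rule compact_uniformly_continuous[OF cLzC Ccomp])
    obtain \<rho>1 where \<rho>1: "\<rho>1 > 0" "\<And>p q. p \<in> C \<Longrightarrow> q \<in> C \<Longrightarrow> dist q p < \<rho>1 \<Longrightarrow> dist (Lx' q) (Lx' p) < \<gamma>"
      using ucx \<gamma>pos unfolding uniformly_continuous_on_def by metis
    obtain \<rho>2 where \<rho>2: "\<rho>2 > 0" "\<And>p q. p \<in> C \<Longrightarrow> q \<in> C \<Longrightarrow> dist q p < \<rho>2 \<Longrightarrow> dist (Lv' q) (Lv' p) < \<gamma>"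
      using ucv \<gamma>pos unfolding uniformly_continuous_on_def by metis
    obtain \<rho>3 where \<rho>3: "\<rho>3 > 0" "\<And>p q. p \<in> C \<Longrightarrow> q \<in> C \<Longrightarrow> dist q p < \<rho>3 \<Longrightarrow> dist (Lz' q) (Lz' p) < \<gamma>"
      using ucz \<gamma>pos unfolding uniformly_continuous_on_def by metis
    define \<rho> where "\<rho> = min \<rho>1 (min \<rho>2 \<rho>3)"
    have \<rho>pos: "\<rho> > 0" using \<rho>1 \<rho>2 \<rho>3 by (simp add: \<rho>_def)
    have lambpos: "lam b > 0" by (rule lampos)
    have "((\<lambda>h. (zf (0 + h) b - zf 0 b) / h) \<longlongrightarrow> 0) (at 0)"
      using d0 by (simp add: DERIV_def)
    then obtain s0 where s0: "s0 > 0" "\<And>h. h \<noteq> 0 \<Longrightarrow> norm (h - 0) < s0 \<Longrightarrow> norm ((zf (0 + h) b - zf 0 b) / h - 0) < \<bar>I\<bar> / (4 * lam b)"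
      using I0 lambpos unfolding LIM_eq by (metis divide_pos_pos zero_less_abs_iff zero_less_numeral mult_pos_pos)
    define e where "e = min (min (\<delta> / 2) (1 / 2)) (min (s0 / 2) (min (1 / (2 * C1 + 2)) (\<rho> / (2 * (N + C1 + 1)))))"
    have NC: "N + C1 + 1 > 0" using N0 C1pos by simp
    have epos: "e > 0" unfolding e_def using \<delta> s0 C1pos \<rho>pos NC by auto
    have e\<delta>: "e < \<delta>" and e1: "e \<le> 1" and es0: "e < s0" using \<delta> s0 by (auto simp: e_def)
    have eC1: "C1 * e < 1"
    proof -
      have "e \<le> 1 / (2 * C1 + 2)" by (simp add: e_def)
      then have "C1 * e \<le> C1 * (1 / (2 * C1 + 2))" using C1pos by (intro mult_left_mono) auto
      also have "\<dots> < 1" using C1pos by (simp add: field_simps)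
      finally show ?thesis .
    qed
    have e\<rho>: "e * (N + C1) < \<rho>"
    proof -
      have "e \<le> \<rho> / (2 * (N + C1 + 1))" by (simp add: e_def)
      then have "e * (N + C1) \<le> \<rho> / (2 * (N + C1 + 1)) * (N + C1)" using N0 C1pos by (intro mult_right_mono) auto
      also have "\<dots> < \<rho>"
      proof -
        have k: "(N + C1) / (2 * (N + C1 + 1)) < 1" using NC N0 C1pos by (simp add: field_simps)
        have "\<rho> * ((N + C1) / (2 * (N + C1 + 1))) < \<rho> * 1" by (rule mult_strict_left_mono[OF k \<rho>pos])
        then show ?thesis by (simp add: mult_ac)
      qed
      finally show ?thesis .
    qed
    have ae: "\<bar>e\<bar> = e" using epos by simp
    have G: "\<bar>de e t\<bar> \<le> C1 * e" if "t \<in> {a..b}" for t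
      using gron[of e t] epos e\<delta> e1 eC1 that by simp
    define err where "err t = Le e t - Le 0 t - (e * Q t + Lz0 t * de e t)" for t
    have errb: "\<bar>err t\<bar> \<le> \<gamma> * (e * N + C1 * e)" if t: "t \<in> {a..b}" for t
    proof -
      have Gt: "\<bar>de e t\<bar> \<le> C1 * e" by (rule G[OF t])
      have Gt1: "\<bar>de e t\<bar> \<le> 1" using Gt eC1 by simp
      have base: "(t, X t, V t, z0 t) \<in> C" by (rule inC0[OF t])
      have E: "\<bar>Le e t - Le 0 t - (Lx0 t \<bullet> (e *\<^sub>R \<eta> t) + Lv0 t \<bullet> (e *\<^sub>R E t) + Lz0 t * de e t)\<bar>
         \<le> \<gamma> * (norm (e *\<^sub>R \<eta> t) + norm (e *\<^sub>R E t) + \<bar>de e t\<bar>)"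
      proof (rule est[OF t])
        show "0 \<le> \<gamma>" using \<gamma>pos by simp
        fix s :: real assume s: "s \<in> {0..1}"
        have seg: "(t, X t + (s * e) *\<^sub>R \<eta> t, V t + (s * e) *\<^sub>R E t, z0 t + s * de e t) \<in> C"
        proof (rule inC[OF t])
          show "\<bar>s * e\<bar> \<le> 1" using s e1 epos by (auto simp: abs_mult intro: mult_le_one)
          show "\<bar>s * de e t\<bar> \<le> 1" using s Gt1 by (auto simp: abs_mult intro: mult_le_one)
        qed
        have "dist (t, X t + (s * e) *\<^sub>R \<eta> t, V t + (s * e) *\<^sub>R E t, z0 t + s * de e t) (t, X t, V t, z0 t)
             = norm (0::real, (s * e) *\<^sub>R \<eta> t, (s * e) *\<^sub>R E t, s * de e t)"
          by (simp add: dist_norm)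
        also have "\<dots> \<le> \<bar>0::real\<bar> + norm ((s * e) *\<^sub>R \<eta> t) + norm ((s * e) *\<^sub>R E t) + \<bar>s * de e t\<bar>"
          by (rule norm_quad_le)
        also have "\<dots> \<le> e * (norm (\<eta> t) + norm (E t)) + C1 * e"
        proof -
          have "\<bar>s * e\<bar> \<le> e" using s epos by (auto simp: abs_mult intro: mult_le_one)
          then have "norm ((s * e) *\<^sub>R \<eta> t) + norm ((s * e) *\<^sub>R E t) \<le> e * (norm (\<eta> t) + norm (E t))"
            by (simp add: distrib_left[symmetric] mult_right_mono)
          moreover have "\<bar>s * de e t\<bar> \<le> C1 * e"
            using s Gt by (auto simp: abs_mult intro: order_trans[OF mult_left_le_one_le])
          ultimately show ?thesis by simp
        qed
        also have "\<dots> \<le> e * N + C1 * e" using N[OF t] epos by (simp add: mult_left_mono)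
        also have "\<dots> < \<rho>" using e\<rho> by (simp add: algebra_simps)
        finally have d: "dist (t, X t + (s * e) *\<^sub>R \<eta> t, V t + (s * e) *\<^sub>R E t, z0 t + s * de e t) (t, X t, V t, z0 t) < \<rho>" .
        have "dist (Lx' (t, X t + (s * e) *\<^sub>R \<eta> t, V t + (s * e) *\<^sub>R E t, z0 t + s * de e t)) (Lx' (t, X t, V t, z0 t)) < \<gamma>"
          by (rule \<rho>1(2)[OF base seg]) (use d in \<open>simp add: \<rho>_def\<close>)
        moreover have "dist (Lv' (t, X t + (s * e) *\<^sub>R \<eta> t, V t + (s * e) *\<^sub>R E t, z0 t + s * de e t)) (Lv' (t, X t, V t, z0 t)) < \<gamma>"
          by (rule \<rho>2(2)[OF base seg]) (use d in \<open>simp add: \<rho>_def\<close>)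
        moreover have "dist (Lz' (t, X t + (s * e) *\<^sub>R \<eta> t, V t + (s * e) *\<^sub>R E t, z0 t + s * de e t)) (Lz' (t, X t, V t, z0 t)) < \<gamma>"
          by (rule \<rho>3(2)[OF base seg]) (use d in \<open>simp add: \<rho>_def\<close>)
        ultimately show "norm (Lx' (t, X t + (s * e) *\<^sub>R \<eta> t, V t + (s * e) *\<^sub>R E t, z0 t + s * de e t) - Lx0 t) \<le> \<gamma> \<and>
           norm (Lv' (t, X t + (s * e) *\<^sub>R \<eta> t, V t + (s * e) *\<^sub>R E t, z0 t + s * de e t) - Lv0 t) \<le> \<gamma> \<and>
           \<bar>Lz' (t, X t + (s * e) *\<^sub>R \<eta> t, V t + (s * e) *\<^sub>R E t, z0 t + s * de e t) - Lz0 t\<bar> \<le> \<gamma>"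
          by (simp add: dist_norm Lx'_def Lv'_def Lz'_def Lx0_def Lv0_def Lz0_def dist_real_def)
      qed
      have "Lx0 t \<bullet> (e *\<^sub>R \<eta> t) + Lv0 t \<bullet> (e *\<^sub>R E t) = e * Q t"
        by (simp add: Q_def inner_scaleR_right distrib_left)
      then have "\<bar>err t\<bar> \<le> \<gamma> * (norm (e *\<^sub>R \<eta> t) + norm (e *\<^sub>R E t) + \<bar>de e t\<bar>)"
        using E by (simp add: err_def)
      also have "\<dots> \<le> \<gamma> * (e * N + C1 * e)"
      proof (rule mult_left_mono)
        have "norm (e *\<^sub>R \<eta> t) + norm (e *\<^sub>R E t) = e * (norm (\<eta> t) + norm (E t))"
          using epos by (simp add: distrib_left)
        also have "\<dots> \<le> e * N" using N[OF t] epos by (intro mult_left_mono) auto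
        finally show "norm (e *\<^sub>R \<eta> t) + norm (e *\<^sub>R E t) + \<bar>de e t\<bar> \<le> e * N + C1 * e" using Gt by linarith
      qed (use \<gamma>pos in simp)
      finally show ?thesis .
    qed
    define u where "u t = lam t * de e t" for t
    have ud: "(u has_vector_derivative ((- lam t * Lz0 t) * de e t + (Le e t - Le 0 t) * lam t)) (at t within {a..b})"
      if "t \<in> {a..b}" for t
      unfolding u_def has_real_derivative_iff_has_vector_derivative[symmetric]
      by (rule DERIV_mult[OF lamd[OF that] dew[OF _ that]]) (use e\<delta> epos in simp)
    have ftc: "((\<lambda>t. (- lam t * Lz0 t) * de e t + (Le e t - Le 0 t) * lam t) has_integral (u b - u a)) {a..b}"
      by (rule fundamental_theorem_of_calculus[OF less_imp_le[OF ab] ud])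
    have ua: "u a = 0" using de_a[of e] e\<delta> epos by (simp add: u_def)
    have hQ: "((\<lambda>t. e * (lam t * Q t)) has_integral e * I) {a..b}"
      unfolding I_def by (intro has_integral_mult_right integrable_integral integrable_continuous_real continuous_intros lamc cQ)
    have hE: "((\<lambda>t. lam t * err t) has_integral (u b - e * I)) {a..b}"
    proof -
      have "((\<lambda>t. (- lam t * Lz0 t) * de e t + (Le e t - Le 0 t) * lam t - e * (lam t * Q t)) has_integral (u b - u a - e * I)) {a..b}"
        by (rule has_integral_diff[OF ftc hQ])
      moreover have "(\<lambda>t. (- lam t * Lz0 t) * de e t + (Le e t - Le 0 t) * lam t - e * (lam t * Q t)) = (\<lambda>t. lam t * err t)"
        by (rule ext) (simp add: err_def algebra_simps)
      ultimately show ?thesis using ua by simp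
    qed
    have bndE: "norm (u b - e * I) \<le> (\<Lambda> * (\<gamma> * (e * N + C1 * e))) * measure lborel (cbox a b)"
    proof (rule has_integral_bound[of _ "\<lambda>t. lam t * err t"])
      show "0 \<le> \<Lambda> * (\<gamma> * (e * N + C1 * e))" using \<Lambda>pos \<gamma>pos epos N0 C1pos by simp
      show "((\<lambda>t. lam t * err t) has_integral (u b - e * I)) (cbox a b)" using hE by simp
      fix t assume t: "t \<in> cbox a b"
      then have t': "t \<in> {a..b}" by simp
      have "\<bar>lam t * err t\<bar> = lam t * \<bar>err t\<bar>" using lampos[of t] by (simp add: abs_mult)
      also have "\<dots> \<le> \<Lambda> * (\<gamma> * (e * N + C1 * e))"
        using errb[OF t'] \<Lambda>[OF t'] lampos[of t] \<gamma>pos epos N0 C1pos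
        by (intro mult_mono) auto
      finally show "norm (lam t * err t) \<le> \<Lambda> * (\<gamma> * (e * N + C1 * e))" by simp
    qed
    have bndE': "\<bar>u b - e * I\<bar> \<le> e * (\<bar>I\<bar> / 4)"
    proof -
      have "\<bar>u b - e * I\<bar> \<le> (\<Lambda> * (\<gamma> * (e * N + C1 * e))) * (b - a)" using bndE ab by simp
      also have "\<dots> = e * (\<Lambda> * \<gamma> * (N + C1) * (b - a))" by (simp add: algebra_simps)
      also have "\<dots> \<le> e * (\<bar>I\<bar> / 4)" using \<gamma>le epos by (intro mult_left_mono) auto
      finally show ?thesis .
    qed
    have "norm ((zf (0 + e) b - zf 0 b) / e - 0) < \<bar>I\<bar> / (4 * lam b)"
      by (rule s0(2)) (use epos es0 in auto)
    then have "\<bar>de e b\<bar> / e < \<bar>I\<bar> / (4 * lam b)"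
      using epos by (simp add: de_def z0_def)
    then have "\<bar>de e b\<bar> < e * (\<bar>I\<bar> / (4 * lam b))" using epos by (simp add: field_simps)
    then have "lam b * \<bar>de e b\<bar> < lam b * (e * (\<bar>I\<bar> / (4 * lam b)))" by (rule mult_strict_left_mono[OF _ lambpos])
    then have ub: "\<bar>u b\<bar> < e * (\<bar>I\<bar> / 4)" using lambpos by (simp add: u_def abs_mult field_simps)
    have "\<bar>e * I\<bar> \<le> \<bar>u b\<bar> + \<bar>u b - e * I\<bar>" by linarith
    also have "\<dots> < e * (\<bar>I\<bar> / 4) + e * (\<bar>I\<bar> / 4)" using ub bndE' by linarith
    finally have "e * \<bar>I\<bar> < e * (\<bar>I\<bar> / 2)" using epos by (simp add: abs_mult)
    then have "\<bar>I\<bar> < \<bar>I\<bar> / 2" using epos by simp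
    then show False using I0 by simp
  qed
  then show ?thesis using goal_eq by simp
qed


lemma kern_prod_int:
  fixes p :: "real \<Rightarrow> real" and \<alpha> a t :: real
  assumes pc: "continuous_on {a..t} p" and al: "0 < \<alpha>" "\<alpha> < 1" and at: "a \<le> t"
  shows "(\<lambda>\<tau>. (t - \<tau>) powr (- \<alpha>) * p \<tau>) integrable_on {a..t}"
proof -
  have k: "(\<lambda>\<tau>. (t - \<tau>) powr (- \<alpha>)) absolutely_integrable_on {a..t}"
    by (rule nonnegative_absolutely_integrable_1) (use kern_right[OF al at] in \<open>auto simp: has_integral_integrable\<close>)
  have "(\<lambda>\<tau>. p \<tau> * (t - \<tau>) powr (- \<alpha>)) absolutely_integrable_on {a..t}"
  proof (rule absolutely_integrable_bounded_measurable_product_real)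
    show "p \<in> borel_measurable (lebesgue_on {a..t})" by (rule continuous_imp_measurable_on_sets_lebesgue[OF pc]) auto
    show "bounded (p ` {a..t})" by (rule compact_imp_bounded[OF compact_continuous_image[OF pc compact_Icc]])
  qed (use k in auto)
  then have "(\<lambda>\<tau>. p \<tau> * (t - \<tau>) powr (- \<alpha>)) integrable_on {a..t}"
    by (rule set_lebesgue_integral_eq_integral(1))
  then show ?thesis by (simp add: mult.commute)
qed

lemma C1_onE:
  assumes "C1_on S f"
  obtains f' where "\<And>t. t \<in> S \<Longrightarrow> (f has_vector_derivative f' t) (at t within S)" "continuous_on S f'"
  using assms unfolding C1_on_def by blast

lemma C1_on_cont: "C1_on S f \<Longrightarrow> continuous_on S f"
  by (erule C1_onE) (auto simp: continuous_on_eq_continuous_within intro: has_vector_derivative_continuous)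

lemma caputo_lin:
  fixes x \<eta> :: "real \<Rightarrow> real^'n" and \<alpha> a b t \<epsilon> :: real
  assumes x: "C1_on {a..b} x" and \<eta>: "C1_on {a..b} \<eta>" and t: "t \<in> {a..b}" and al: "0 < \<alpha>" "\<alpha> < 1"
  shows "caputo_left a \<alpha> (\<lambda>s. x s $ k + \<epsilon> * \<eta> s $ k) t = caputo_left a \<alpha> (\<lambda>s. x s $ k) t + \<epsilon> * caputo_left a \<alpha> (\<lambda>s. \<eta> s $ k) t"
proof -
  obtain x' where x': "\<And>t. t \<in> {a..b} \<Longrightarrow> (x has_vector_derivative x' t) (at t within {a..b})" "continuous_on {a..b} x'"
    using C1_onE[OF x] by blast
  obtain \<eta>' where \<eta>': "\<And>t. t \<in> {a..b} \<Longrightarrow> (\<eta> has_vector_derivative \<eta>' t) (at t within {a..b})" "continuous_on {a..b} \<eta>'"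
    using C1_onE[OF \<eta>] by blast
  have at: "a \<le> t" "t \<le> b" using t by auto
  have dx: "((\<lambda>s. x s $ k) has_real_derivative x' \<tau> $ k) (at \<tau>)" if "a < \<tau>" "\<tau> < b" for \<tau>
  proof -
    have "(x has_vector_derivative x' \<tau>) (at \<tau>)"
      using x'(1)[of \<tau>] that at_within_Icc_at[OF that] by auto
    from bounded_linear.has_vector_derivative[OF bounded_linear_vec_nth this, of k]
    show ?thesis by (simp add: has_real_derivative_iff_has_vector_derivative)
  qed
  have d\<eta>: "((\<lambda>s. \<eta> s $ k) has_real_derivative \<eta>' \<tau> $ k) (at \<tau>)" if "a < \<tau>" "\<tau> < b" for \<tau>
  proof -
    have "(\<eta> has_vector_derivative \<eta>' \<tau>) (at \<tau>)"
      using \<eta>'(1)[of \<tau>] that at_within_Icc_at[OF that] by auto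
    from bounded_linear.has_vector_derivative[OF bounded_linear_vec_nth this, of k]
    show ?thesis by (simp add: has_real_derivative_iff_has_vector_derivative)
  qed
  have vx: "vector_derivative (\<lambda>s. x s $ k) (at \<tau>) = x' \<tau> $ k" if "a < \<tau>" "\<tau> < b" for \<tau>
    using dx[OF that] by (intro vector_derivative_at) (simp add: has_real_derivative_iff_has_vector_derivative)
  have v\<eta>: "vector_derivative (\<lambda>s. \<eta> s $ k) (at \<tau>) = \<eta>' \<tau> $ k" if "a < \<tau>" "\<tau> < b" for \<tau>
    using d\<eta>[OF that] by (intro vector_derivative_at) (simp add: has_real_derivative_iff_has_vector_derivative)
  have vs: "vector_derivative (\<lambda>s. x s $ k + \<epsilon> * \<eta> s $ k) (at \<tau>) = x' \<tau> $ k + \<epsilon> * \<eta>' \<tau> $ k" if "a < \<tau>" "\<tau> < b" for \<tau>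
  proof (intro vector_derivative_at)
    have "((\<lambda>s. x s $ k + \<epsilon> * \<eta> s $ k) has_real_derivative x' \<tau> $ k + \<epsilon> * \<eta>' \<tau> $ k) (at \<tau>)"
      by (intro DERIV_add DERIV_cmult dx[OF that] d\<eta>[OF that])
    then show "((\<lambda>s. x s $ k + \<epsilon> * \<eta> s $ k) has_vector_derivative x' \<tau> $ k + \<epsilon> * \<eta>' \<tau> $ k) (at \<tau>)"
      by (simp add: has_real_derivative_iff_has_vector_derivative)
  qed
  have sub: "{a..t} \<subseteq> {a..b}" using at by auto
  have cx: "continuous_on {a..t} (\<lambda>\<tau>. x' \<tau> $ k)"
    by (intro continuous_intros continuous_on_subset[OF x'(2) sub])
  have c\<eta>: "continuous_on {a..t} (\<lambda>\<tau>. \<eta>' \<tau> $ k)"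
    by (intro continuous_intros continuous_on_subset[OF \<eta>'(2) sub])
  have ix: "(\<lambda>\<tau>. (t - \<tau>) powr (- \<alpha>) * x' \<tau> $ k) integrable_on {a..t}" by (rule kern_prod_int[OF cx al at(1)])
  have i\<eta>: "(\<lambda>\<tau>. (t - \<tau>) powr (- \<alpha>) * \<eta>' \<tau> $ k) integrable_on {a..t}" by (rule kern_prod_int[OF c\<eta> al at(1)])
  have neg: "negligible {a, t}" by simp
  have e1: "integral {a..t} (\<lambda>\<tau>. (t - \<tau>) powr (- \<alpha>) * vector_derivative (\<lambda>s. x s $ k + \<epsilon> * \<eta> s $ k) (at \<tau>))
      = integral {a..t} (\<lambda>\<tau>. (t - \<tau>) powr (- \<alpha>) * x' \<tau> $ k + \<epsilon> * ((t - \<tau>) powr (- \<alpha>) * \<eta>' \<tau> $ k))"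
    by (rule integral_spike[OF neg]) (use at in \<open>auto simp: vs algebra_simps\<close>)
  have e2: "integral {a..t} (\<lambda>\<tau>. (t - \<tau>) powr (- \<alpha>) * vector_derivative (\<lambda>s. x s $ k) (at \<tau>))
      = integral {a..t} (\<lambda>\<tau>. (t - \<tau>) powr (- \<alpha>) * x' \<tau> $ k)"
    by (rule integral_spike[OF neg]) (use at in \<open>auto simp: vx\<close>)
  have e3: "integral {a..t} (\<lambda>\<tau>. (t - \<tau>) powr (- \<alpha>) * vector_derivative (\<lambda>s. \<eta> s $ k) (at \<tau>))
      = integral {a..t} (\<lambda>\<tau>. (t - \<tau>) powr (- \<alpha>) * \<eta>' \<tau> $ k)"
    by (rule integral_spike[OF neg]) (use at in \<open>auto simp: v\<eta>\<close>)
  have e4: "integral {a..t} (\<lambda>\<tau>. (t - \<tau>) powr (- \<alpha>) * x' \<tau> $ k + \<epsilon> * ((t - \<tau>) powr (- \<alpha>) * \<eta>' \<tau> $ k))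
     = integral {a..t} (\<lambda>\<tau>. (t - \<tau>) powr (- \<alpha>) * x' \<tau> $ k) + \<epsilon> * integral {a..t} (\<lambda>\<tau>. (t - \<tau>) powr (- \<alpha>) * \<eta>' \<tau> $ k)"
    by (simp add: integral_add[OF ix integrable_on_mult_right[OF i\<eta>]])
  show ?thesis unfolding caputo_left_def e1 e2 e3 e4 by (simp add: algebra_simps)
qed

lemma ibp_RL:
  fixes g \<psi> \<psi>' :: "real \<Rightarrow> real" and a b \<alpha> :: real
  assumes ab: "a < b" and al: "0 < \<alpha>" "\<alpha> < 1" and gc: "continuous_on {a..b} g"
    and ex: "\<forall>t\<in>{a..b}. right_RL_deriv_exists a b \<alpha> g t"
    and rc: "continuous_on {a..b} (\<lambda>t. right_RL_deriv a b \<alpha> g t)"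
    and \<psi>d: "\<And>t. (\<psi> has_real_derivative \<psi>' t) (at t)" and \<psi>'c: "continuous_on {a..b} \<psi>'"
    and \<psi>a: "\<psi> a = 0"
  shows "integral {a..b} (\<lambda>t. g t * caputo_left a \<alpha> \<psi> t) = integral {a..b} (\<lambda>t. \<psi> t * right_RL_deriv a b \<alpha> g t)"
proof -
  define \<Gamma> where "\<Gamma> = Gamma (1 - \<alpha>)"
  have \<Gamma>pos: "\<Gamma> > 0" unfolding \<Gamma>_def using al by (intro Gamma_real_pos) simp
  define K where "K = right_RL_kernel \<alpha> b g"
  define K' where "K' t = vector_derivative K (at t within {a..b})" for t
  define R where "R t = right_RL_deriv a b \<alpha> g t" for t
  have K'R: "K' t = - \<Gamma> * R t" for t
    using \<Gamma>pos by (simp add: K'_def R_def right_RL_deriv_def K_def \<Gamma>_def field_simps)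
  have Kd: "(K has_vector_derivative K' t) (at t within {a..b})" if "t \<in> {a..b}" for t
    using ex that unfolding K'_def K_def right_RL_deriv_exists_def by (simp add: vector_derivative_works[symmetric])
  have \<psi>c: "continuous_on {a..b} \<psi>"
    using \<psi>d by (intro continuous_at_imp_continuous_on) (auto intro: DERIV_isCont)
  have vd: "vector_derivative \<psi> (at \<tau>) = \<psi>' \<tau>" for \<tau>
    using \<psi>d[of \<tau>] by (intro vector_derivative_at) (simp add: has_real_derivative_iff_has_vector_derivative)
  have cap: "caputo_left a \<alpha> \<psi> t = 1 / \<Gamma> * integral {a..t} (\<lambda>\<tau>. (t - \<tau>) powr (- \<alpha>) * \<psi>' \<tau>)" for t
    by (simp add: caputo_left_def vd \<Gamma>_def)
  have Kb: "K b = 0" by (simp add: K_def right_RL_kernel_def)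
  have pd: "((\<lambda>t. \<psi> t * K t) has_vector_derivative (\<psi>' t * K t + K' t * \<psi> t)) (at t within {a..b})" if "t \<in> {a..b}" for t
  proof -
    have "(K has_real_derivative K' t) (at t within {a..b})"
      using Kd[OF that] by (simp add: has_real_derivative_iff_has_vector_derivative)
    from DERIV_mult[OF has_field_derivative_at_within[OF \<psi>d] this]
    show ?thesis by (simp add: has_real_derivative_iff_has_vector_derivative)
  qed
  have h1: "((\<lambda>t. \<psi>' t * K t + K' t * \<psi> t) has_integral 0) {a..b}"
    using fundamental_theorem_of_calculus[OF less_imp_le[OF ab] pd] Kb \<psi>a by simp
  define I2 where "I2 = integral {a..b} (\<lambda>t. \<psi> t * R t)"
  have h2: "((\<lambda>t. K' t * \<psi> t) has_integral (- \<Gamma> * I2)) {a..b}"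
  proof -
    have "((\<lambda>t. - \<Gamma> * (\<psi> t * R t)) has_integral (- \<Gamma> * I2)) {a..b}"
      unfolding I2_def R_def
      by (intro has_integral_mult_right integrable_integral integrable_continuous_real continuous_intros \<psi>c rc)
    then show ?thesis by (simp add: K'R mult_ac)
  qed
  have h3: "((\<lambda>t. \<psi>' t * K t) has_integral (\<Gamma> * I2)) {a..b}"
    using has_integral_diff[OF h1 h2] by simp
  have fub: "integral {a..b} (\<lambda>t. g t * integral {a..t} (\<lambda>\<tau>. (t - \<tau>) powr (- \<alpha>) * \<psi>' \<tau>)) =
         integral {a..b} (\<lambda>\<tau>. \<psi>' \<tau> * K \<tau>)"
    unfolding K_def right_RL_kernel_def by (rule fubini_tri[OF gc \<psi>'c al less_imp_le[OF ab]])
  have "integral {a..b} (\<lambda>t. g t * caputo_left a \<alpha> \<psi> t)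
      = integral {a..b} (\<lambda>t. 1 / \<Gamma> * (g t * integral {a..t} (\<lambda>\<tau>. (t - \<tau>) powr (- \<alpha>) * \<psi>' \<tau>)))"
    by (simp add: cap mult_ac)
  also have "\<dots> = 1 / \<Gamma> * integral {a..b} (\<lambda>t. g t * integral {a..t} (\<lambda>\<tau>. (t - \<tau>) powr (- \<alpha>) * \<psi>' \<tau>))"
    by (rule integral_mult_right)
  also have "\<dots> = I2" unfolding fub using integral_unique[OF h3] \<Gamma>pos by simp
  finally show ?thesis by (simp add: I2_def R_def)
qed


lemma caputo_axis:
  fixes \<alpha> :: "'n::finite \<Rightarrow> real" and j :: 'n and \<psi> :: "real \<Rightarrow> real"
  shows "caputo_vec a \<alpha> (\<lambda>s. \<psi> s *\<^sub>R axis j (1::real)) t = caputo_left a (\<alpha> j) \<psi> t *\<^sub>R axis j 1"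
proof -
  have "caputo_left a (\<alpha> k) (\<lambda>s. (\<psi> s *\<^sub>R axis j (1::real)) $ k) t = (caputo_left a (\<alpha> j) \<psi> t *\<^sub>R axis j (1::real)) $ k" for k
  proof (cases "k = j")
    case True then show ?thesis by (simp add: axis_def)
  next
    case False
    then have "(\<lambda>s. (\<psi> s *\<^sub>R axis j (1::real)) $ k) = (\<lambda>s. 0)" by (auto simp: axis_def)
    then show ?thesis using False by (simp add: caputo_left_def axis_def)
  qed
  then show ?thesis unfolding caputo_vec_def by (simp add: vec_eq_iff)
qed

lemma test_adm:
  fixes \<alpha> :: "'n::finite \<Rightarrow> real" and j :: 'n and a b :: real and i :: nat
  assumes ab: "a < b" and alpha: "\<forall>j. 0 < \<alpha> j \<and> \<alpha> j < 1"
  shows "admissible a b \<alpha> (\<lambda>s. ((b - a) * (s - a) ^ (i + 2) + (-1) * (s - a) ^ (i + 3)) *\<^sub>R axis j (1::real))"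
proof -
  define \<psi> where "\<psi> s = (b - a) * (s - a) ^ (i + 2) + (-1) * (s - a) ^ (i + 3)" for s
  define \<psi>' where "\<psi>' s = (b - a) * (real (i + 2) * (s - a) ^ (i + 2 - 1)) + (-1) * (real (i + 3) * (s - a) ^ (i + 3 - 1))" for s
  have p: "((\<lambda>s. (s - a) ^ n) has_real_derivative real n * (s - a) ^ (n - 1)) (at s)" for n s
    by (auto intro!: derivative_eq_intros)
  have \<psi>d: "(\<psi> has_real_derivative \<psi>' s) (at s)" for s
    unfolding \<psi>_def \<psi>'_def by (intro DERIV_add DERIV_cmult p)
  have al: "0 < \<alpha> j" "\<alpha> j < 1" using alpha by auto
  have C1a: "C1_on {a..b} (\<lambda>s. \<psi> s *\<^sub>R axis j (1::real))"
    unfolding C1_on_def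
  proof (intro exI conjI ballI)
    fix s assume "s \<in> {a..b}"
    have "(\<psi> has_vector_derivative \<psi>' s) (at s within {a..b})"
      using \<psi>d[of s] by (simp add: has_real_derivative_iff_has_vector_derivative[symmetric] has_field_derivative_at_within)
    from bounded_linear.has_vector_derivative[OF bounded_linear_scaleR_left this, of "axis j (1::real)"]
    show "((\<lambda>s. \<psi> s *\<^sub>R axis j (1::real)) has_vector_derivative \<psi>' s *\<^sub>R axis j (1::real)) (at s within {a..b})" by simp
  next
    show "continuous_on {a..b} (\<lambda>s. \<psi>' s *\<^sub>R axis j (1::real))"
      unfolding \<psi>'_def by (intro continuous_intros)
  qed
  define \<Gamma> where "\<Gamma> = Gamma (1 - \<alpha> j)"
  define A1 where "A1 = (b - a) * real (i + 2) * Beta (real (i + 2)) (1 - \<alpha> j) / \<Gamma>"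
  define A2 where "A2 = (-1) * real (i + 3) * Beta (real (i + 3)) (1 - \<alpha> j) / \<Gamma>"
  define r1 where "r1 = real (i + 2) - \<alpha> j"
  define r2 where "r2 = real (i + 3) - \<alpha> j"
  have r1: "r1 > 1" and r2: "r2 > 1" using al by (auto simp: r1_def r2_def)
  define D where "D s = A1 * (s - a) powr r1 + A2 * (s - a) powr r2" for s
  define D' where "D' s = A1 * (r1 * (s - a) powr (r1 - 1)) + A2 * (r2 * (s - a) powr (r2 - 1))" for s
  have capD: "caputo_left a (\<alpha> j) \<psi> s = D s" if "s \<in> {a..b}" for s
  proof -
    have "caputo_left a (\<alpha> j) \<psi> s =
      ((b - a) * real (i + 2) * Beta (real (i + 2)) (1 - \<alpha> j) * (s - a) powr (real (i + 2) - \<alpha> j) +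
       (-1) * real (i + 3) * Beta (real (i + 3)) (1 - \<alpha> j) * (s - a) powr (real (i + 3) - \<alpha> j)) / Gamma (1 - \<alpha> j)"
      unfolding \<psi>_def by (rule caputo_poly[OF al]) (use that in auto)
    then show ?thesis by (simp add: D_def A1_def A2_def r1_def r2_def \<Gamma>_def add_divide_distrib)
  qed
  have Dd: "(D has_real_derivative D' s) (at s within {a..b})" if "s \<in> {a..b}" for s
    unfolding D_def D'_def
    by (intro DERIV_add DERIV_cmult powr_deriv_right r1 r2 that)
  have D'c: "continuous_on {a..b} D'"
    unfolding D'_def using r1 r2 by (intro continuous_intros continuous_on_powr') auto
  have C1b: "C1_on {a..b} (caputo_vec a \<alpha> (\<lambda>s. \<psi> s *\<^sub>R axis j (1::real)))"
    unfolding C1_on_def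
  proof (intro exI conjI ballI)
    fix s assume s: "s \<in> {a..b}"
    have "(D has_vector_derivative D' s) (at s within {a..b})"
      using Dd[OF s] by (simp add: has_real_derivative_iff_has_vector_derivative)
    from bounded_linear.has_vector_derivative[OF bounded_linear_scaleR_left this, of "axis j (1::real)"]
    have "((\<lambda>s. D s *\<^sub>R axis j (1::real)) has_vector_derivative D' s *\<^sub>R axis j (1::real)) (at s within {a..b})" by simp
    then show "(caputo_vec a \<alpha> (\<lambda>s. \<psi> s *\<^sub>R axis j (1::real)) has_vector_derivative D' s *\<^sub>R axis j (1::real)) (at s within {a..b})"
      by (rule has_vector_derivative_transform[OF s, rotated]) (simp add: caputo_axis capD)
  next
    show "continuous_on {a..b} (\<lambda>s. D' s *\<^sub>R axis j (1::real))" by (intro continuous_intros D'c)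
  qed
  show ?thesis using C1a C1b unfolding admissible_def \<psi>_def by simp
qed


theorem theorem3p2:
  fixes a b za :: real
    and \<alpha> :: "'n::finite \<Rightarrow> real"
    and xa :: "real^'n"
    and L Lt Lz :: "real \<Rightarrow> real^'n \<Rightarrow> real^'n \<Rightarrow> real \<Rightarrow> real"
    and Lx Lv :: "real \<Rightarrow> real^'n \<Rightarrow> real^'n \<Rightarrow> real \<Rightarrow> real^'n"
    and Z :: "(real \<Rightarrow> real^'n) \<Rightarrow> real \<Rightarrow> real"
    and x :: "real \<Rightarrow> real^'n"
    and J :: "'n set"
  assumes ab: "a < b"
    and alpha: "\<forall>j. 0 < \<alpha> j \<and> \<alpha> j < 1"
    and L_C1_deriv: "\<forall>t\<in>{a..b}. \<forall>y v w.
         ((\<lambda>(s, y', v', w'). L s y' v' w') has_derivative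
            (\<lambda>(ds, dy, dv, dw). Lt t y v w * ds + Lx t y v w \<bullet> dy + Lv t y v w \<bullet> dv + Lz t y v w * dw))
         (at (t, y, v, w) within {a..b} \<times> UNIV)"
    and L_C1_cont: "continuous_on ({a..b} \<times> UNIV) (\<lambda>(t, y, v, w). Lt t y v w)"
      "continuous_on ({a..b} \<times> UNIV) (\<lambda>(t, y, v, w). Lx t y v w)"
      "continuous_on ({a..b} \<times> UNIV) (\<lambda>(t, y, v, w). Lv t y v w)"
      "continuous_on ({a..b} \<times> UNIV) (\<lambda>(t, y, v, w). Lz t y v w)"
    and x_adm: "admissible a b \<alpha> x"
    and x_init: "x a = xa"
    and z_sol: "herglotz_solution a b \<alpha> L za x (Z x)"
    and RL_exists: "\<forall>j. (\<forall>t\<in>{a..b}. right_RL_deriv_exists a b (\<alpha> j)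
            (\<lambda>t. herglotz_lambda a \<alpha> Lz x (Z x) t * Lv t (x t) (caputo_vec a \<alpha> x t) (Z x t) $ j) t)
         \<and> continuous_on {a..b} (\<lambda>t. right_RL_deriv a b (\<alpha> j)
            (\<lambda>t. herglotz_lambda a \<alpha> Lz x (Z x) t * Lv t (x t) (caputo_vec a \<alpha> x t) (Z x t) $ j) t)"
    and extremal: "\<forall>\<eta>. admissible a b \<alpha> \<eta> \<and> \<eta> a = 0 \<and> (\<forall>j. j \<notin> J \<longrightarrow> \<eta> b $ j = 0) \<longrightarrow>
         (\<exists>\<delta>>0. \<forall>\<epsilon>. \<bar>\<epsilon>\<bar> < \<delta> \<longrightarrow>
              herglotz_solution a b \<alpha> L za (\<lambda>t. x t + \<epsilon> *\<^sub>R \<eta> t) (Z (\<lambda>t. x t + \<epsilon> *\<^sub>R \<eta> t)))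
         \<and> (\<forall>t\<in>{a..b}. (\<lambda>\<epsilon>. Z (\<lambda>s. x s + \<epsilon> *\<^sub>R \<eta> s) t) differentiable (at 0))
         \<and> ((\<lambda>\<epsilon>. Z (\<lambda>s. x s + \<epsilon> *\<^sub>R \<eta> s) b) has_real_derivative 0) (at 0)"
  shows "(\<forall>j. \<forall>t\<in>{a..b}.
            herglotz_lambda a \<alpha> Lz x (Z x) t * Lx t (x t) (caputo_vec a \<alpha> x t) (Z x t) $ j
            + right_RL_deriv a b (\<alpha> j)
                (\<lambda>t. herglotz_lambda a \<alpha> Lz x (Z x) t * Lv t (x t) (caputo_vec a \<alpha> x t) (Z x t) $ j) t = 0)
       \<and> (\<forall>j\<in>J. right_RL_int (1 - \<alpha> j) b
                (\<lambda>t. herglotz_lambda a \<alpha> Lz x (Z x) t * Lv t (x t) (caputo_vec a \<alpha> x t) (Z x t) $ j) b = 0)"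
proof -
  have part2: "\<forall>j\<in>J. right_RL_int (1 - \<alpha> j) b
                (\<lambda>t. herglotz_lambda a \<alpha> Lz x (Z x) t * Lv t (x t) (caputo_vec a \<alpha> x t) (Z x t) $ j) b = 0"
    by (simp add: right_RL_int_def)
  have xC1: "C1_on {a..b} x" and VC1: "C1_on {a..b} (caputo_vec a \<alpha> x)"
    using x_adm by (auto simp: admissible_def)
  have cx: "continuous_on {a..b} x" by (rule C1_on_cont[OF xC1])
  have cV: "continuous_on {a..b} (caputo_vec a \<alpha> x)" by (rule C1_on_cont[OF VC1])
  have Zd: "(Z x has_real_derivative L s (x s) (caputo_vec a \<alpha> x s) (Z x s)) (at s within {a..b})" if "s \<in> {a..b}" for s
    using z_sol that by (auto simp: herglotz_solution_def)
  have cZ: "continuous_on {a..b} (Z x)"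
    unfolding continuous_on_eq_continuous_within using DERIV_continuous[OF Zd] by blast
  have curve: "continuous_on {a..b} (\<lambda>s. (s, x s, caputo_vec a \<alpha> x s, Z x s))"
    by (intro continuous_intros cx cV cZ)
  have cLx0: "continuous_on {a..b} (\<lambda>s. Lx s (x s) (caputo_vec a \<alpha> x s) (Z x s))"
  proof -
    have "continuous_on {a..b} (\<lambda>s. (\<lambda>(t, y, v, w). Lx t y v w) (s, x s, caputo_vec a \<alpha> x s, Z x s))"
      by (rule continuous_on_compose2[OF L_C1_cont(2) curve]) auto
    then show ?thesis by simp
  qed
  have cLv0: "continuous_on {a..b} (\<lambda>s. Lv s (x s) (caputo_vec a \<alpha> x s) (Z x s))"
  proof -
    have "continuous_on {a..b} (\<lambda>s. (\<lambda>(t, y, v, w). Lv t y v w) (s, x s, caputo_vec a \<alpha> x s, Z x s))"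
      by (rule continuous_on_compose2[OF L_C1_cont(3) curve]) auto
    then show ?thesis by simp
  qed
  have cLz0: "continuous_on {a..b} (\<lambda>s. Lz s (x s) (caputo_vec a \<alpha> x s) (Z x s))"
  proof -
    have "continuous_on {a..b} (\<lambda>s. (\<lambda>(t, y, v, w). Lz t y v w) (s, x s, caputo_vec a \<alpha> x s, Z x s))"
      by (rule continuous_on_compose2[OF L_C1_cont(4) curve]) auto
    then show ?thesis by simp
  qed
  have clam: "continuous_on {a..b} (herglotz_lambda a \<alpha> Lz x (Z x))"
  proof -
    have "continuous_on {a..b} (\<lambda>u. integral {a..u} (\<lambda>s. Lz s (x s) (caputo_vec a \<alpha> x s) (Z x s)))"
      unfolding continuous_on_eq_continuous_within
      using has_vector_derivative_continuous[OF integral_has_vector_derivative[OF cLz0]] by blast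
    then show ?thesis unfolding herglotz_lambda_def by (intro continuous_intros)
  qed
  have part1: "\<forall>j. \<forall>t\<in>{a..b}.
            herglotz_lambda a \<alpha> Lz x (Z x) t * Lx t (x t) (caputo_vec a \<alpha> x t) (Z x t) $ j
            + right_RL_deriv a b (\<alpha> j)
                (\<lambda>t. herglotz_lambda a \<alpha> Lz x (Z x) t * Lv t (x t) (caputo_vec a \<alpha> x t) (Z x t) $ j) t = 0"
  proof (intro allI ballI)
    fix j t assume t: "t \<in> {a..b}"
    define g where "g s = herglotz_lambda a \<alpha> Lz x (Z x) s * Lv s (x s) (caputo_vec a \<alpha> x s) (Z x s) $ j" for s
    define h where "h s = herglotz_lambda a \<alpha> Lz x (Z x) s * Lx s (x s) (caputo_vec a \<alpha> x s) (Z x s) $ j" for s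
    define R where "R s = right_RL_deriv a b (\<alpha> j) g s" for s
    have al: "0 < \<alpha> j" "\<alpha> j < 1" using alpha by auto
    have cg: "continuous_on {a..b} g" unfolding g_def by (intro continuous_intros clam cLv0)
    have ch: "continuous_on {a..b} h" unfolding h_def by (intro continuous_intros clam cLx0)
    have gfun: "(\<lambda>t. herglotz_lambda a \<alpha> Lz x (Z x) t * Lv t (x t) (caputo_vec a \<alpha> x t) (Z x t) $ j) = g"
      by (rule ext) (simp add: g_def)
    have RLe: "\<forall>s\<in>{a..b}. right_RL_deriv_exists a b (\<alpha> j) g s" and cR: "continuous_on {a..b} R"
      using RL_exists[rule_format, of j] unfolding gfun R_def by auto
    have orth: "integral {a..b} (\<lambda>s. (h s + R s) * ((b - a) * (s - a) ^ (i + 2) - (s - a) ^ (i + 3))) = 0" for i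
    proof -
      define \<psi> where "\<psi> s = (b - a) * (s - a) ^ (i + 2) + (-1) * (s - a) ^ (i + 3)" for s
      define \<psi>' where "\<psi>' s = (b - a) * (real (i + 2) * (s - a) ^ (i + 2 - 1)) + (-1) * (real (i + 3) * (s - a) ^ (i + 3 - 1))" for s
      have p: "((\<lambda>s. (s - a) ^ n) has_real_derivative real n * (s - a) ^ (n - 1)) (at s)" for n s
        by (auto intro!: derivative_eq_intros)
      have \<psi>d: "(\<psi> has_real_derivative \<psi>' s) (at s)" for s
        unfolding \<psi>_def \<psi>'_def by (intro DERIV_add DERIV_cmult p)
      have \<psi>'c: "continuous_on {a..b} \<psi>'" unfolding \<psi>'_def by (intro continuous_intros)
      have \<psi>c: "continuous_on {a..b} \<psi>" unfolding \<psi>_def by (intro continuous_intros)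
      have \<psi>a: "\<psi> a = 0" by (simp add: \<psi>_def)
      have \<psi>b: "\<psi> b = 0" by (simp add: \<psi>_def power_add power3_eq_cube)
      define \<eta> where "\<eta> s = \<psi> s *\<^sub>R axis j (1::real)" for s
      have adm: "admissible a b \<alpha> \<eta>"
        using test_adm[OF ab alpha, of i j] by (simp add: \<eta>_def[abs_def] \<psi>_def[abs_def])
      have \<eta>C1: "C1_on {a..b} \<eta>" and EC1: "C1_on {a..b} (caputo_vec a \<alpha> \<eta>)" using adm by (auto simp: admissible_def)
      have c\<eta>: "continuous_on {a..b} \<eta>" by (rule C1_on_cont[OF \<eta>C1])
      have cE: "continuous_on {a..b} (caputo_vec a \<alpha> \<eta>)" by (rule C1_on_cont[OF EC1])
      have Eax: "caputo_vec a \<alpha> \<eta> s = caputo_left a (\<alpha> j) \<psi> s *\<^sub>R axis j (1::real)" for s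
        unfolding \<eta>_def by (rule caputo_axis)
      have cD: "continuous_on {a..b} (\<lambda>s. caputo_left a (\<alpha> j) \<psi> s)"
      proof -
        have "continuous_on {a..b} (\<lambda>s. caputo_vec a \<alpha> \<eta> s $ j)" by (intro continuous_intros cE)
        then show ?thesis by (simp add: Eax axis_def)
      qed
      have \<eta>a: "\<eta> a = 0" by (simp add: \<eta>_def \<psi>a)
      have \<eta>b: "\<forall>k. k \<notin> J \<longrightarrow> \<eta> b $ k = 0" by (simp add: \<eta>_def \<psi>b)
      obtain \<delta> where \<delta>: "\<delta> > 0" and hs: "\<And>\<epsilon>. \<bar>\<epsilon>\<bar> < \<delta> \<Longrightarrow>
              herglotz_solution a b \<alpha> L za (\<lambda>t. x t + \<epsilon> *\<^sub>R \<eta> t) (Z (\<lambda>t. x t + \<epsilon> *\<^sub>R \<eta> t))"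
        and d0: "((\<lambda>\<epsilon>. Z (\<lambda>s. x s + \<epsilon> *\<^sub>R \<eta> s) b) has_real_derivative 0) (at 0)"
        using extremal[rule_format, of \<eta>] adm \<eta>a \<eta>b by blast
      have lin: "caputo_vec a \<alpha> (\<lambda>t. x t + e *\<^sub>R \<eta> t) s = caputo_vec a \<alpha> x s + e *\<^sub>R caputo_vec a \<alpha> \<eta> s"
        if s: "s \<in> {a..b}" for e s
      proof -
        have "caputo_left a (\<alpha> k) (\<lambda>t. x t $ k + e * \<eta> t $ k) s = caputo_left a (\<alpha> k) (\<lambda>t. x t $ k) s + e * caputo_left a (\<alpha> k) (\<lambda>t. \<eta> t $ k) s" for k
          using alpha by (intro caputo_lin[OF xC1 \<eta>C1 s]) auto
        then show ?thesis unfolding caputo_vec_def by (simp add: vec_eq_iff)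
      qed
      have var: "integral {a..b} (\<lambda>t. exp (- integral {a..t} (\<lambda>\<tau>. Lz \<tau> (x \<tau>) (caputo_vec a \<alpha> x \<tau>) ((\<lambda>e. Z (\<lambda>s. x s + e *\<^sub>R \<eta> s)) 0 \<tau>))) *
            (Lx t (x t) (caputo_vec a \<alpha> x t) ((\<lambda>e. Z (\<lambda>s. x s + e *\<^sub>R \<eta> s)) 0 t) \<bullet> \<eta> t
             + Lv t (x t) (caputo_vec a \<alpha> x t) ((\<lambda>e. Z (\<lambda>s. x s + e *\<^sub>R \<eta> s)) 0 t) \<bullet> caputo_vec a \<alpha> \<eta> t)) = 0"
      proof (rule variation[OF ab L_C1_deriv L_C1_cont(2) L_C1_cont(3) L_C1_cont(4) cx cV c\<eta> cE \<delta>])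
        fix e assume e: "\<bar>e\<bar> < \<delta>"
        show "Z (\<lambda>s. x s + e *\<^sub>R \<eta> s) a = za" using hs[OF e] by (simp add: herglotz_solution_def)
      next
        fix e s assume e: "\<bar>e\<bar> < \<delta>" and s: "s \<in> {a..b}"
        have "(Z (\<lambda>t. x t + e *\<^sub>R \<eta> t) has_real_derivative
            L s (x s + e *\<^sub>R \<eta> s) (caputo_vec a \<alpha> (\<lambda>t. x t + e *\<^sub>R \<eta> t) s) (Z (\<lambda>t. x t + e *\<^sub>R \<eta> t) s)) (at s within {a..b})"
          using hs[OF e] s by (simp add: herglotz_solution_def)
        then show "((\<lambda>e. Z (\<lambda>s. x s + e *\<^sub>R \<eta> s)) e has_real_derivative
            L s (x s + e *\<^sub>R \<eta> s) (caputo_vec a \<alpha> x s + e *\<^sub>R caputo_vec a \<alpha> \<eta> s) ((\<lambda>e. Z (\<lambda>s. x s + e *\<^sub>R \<eta> s)) e s)) (at s within {a..b})"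
          by (simp add: lin[OF s])
      next
        show "((\<lambda>e. (\<lambda>e. Z (\<lambda>s. x s + e *\<^sub>R \<eta> s)) e b) has_real_derivative 0) (at 0)" using d0 by simp
      qed
      have var2: "integral {a..b} (\<lambda>s. h s * \<psi> s + g s * caputo_left a (\<alpha> j) \<psi> s) = 0"
      proof -
        have "integral {a..b} (\<lambda>s. h s * \<psi> s + g s * caputo_left a (\<alpha> j) \<psi> s) =
          integral {a..b} (\<lambda>t. exp (- integral {a..t} (\<lambda>\<tau>. Lz \<tau> (x \<tau>) (caputo_vec a \<alpha> x \<tau>) ((\<lambda>e. Z (\<lambda>s. x s + e *\<^sub>R \<eta> s)) 0 \<tau>))) *
            (Lx t (x t) (caputo_vec a \<alpha> x t) ((\<lambda>e. Z (\<lambda>s. x s + e *\<^sub>R \<eta> s)) 0 t) \<bullet> \<eta> t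
             + Lv t (x t) (caputo_vec a \<alpha> x t) ((\<lambda>e. Z (\<lambda>s. x s + e *\<^sub>R \<eta> s)) 0 t) \<bullet> caputo_vec a \<alpha> \<eta> t))"
          by (rule integral_cong) (simp add: h_def g_def herglotz_lambda_def \<eta>_def Eax inner_axis algebra_simps)
        then show ?thesis using var by simp
      qed
      have ibp: "integral {a..b} (\<lambda>s. g s * caputo_left a (\<alpha> j) \<psi> s) = integral {a..b} (\<lambda>s. \<psi> s * R s)"
        unfolding R_def by (rule ibp_RL[OF ab al cg RLe cR[unfolded R_def] \<psi>d \<psi>'c \<psi>a])
      have i1: "(\<lambda>s. h s * \<psi> s) integrable_on {a..b}" by (intro integrable_continuous_real continuous_intros ch \<psi>c)
      have i2: "(\<lambda>s. g s * caputo_left a (\<alpha> j) \<psi> s) integrable_on {a..b}" by (intro integrable_continuous_real continuous_intros cg cD)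
      have i3: "(\<lambda>s. \<psi> s * R s) integrable_on {a..b}" by (intro integrable_continuous_real continuous_intros cR \<psi>c)
      have "integral {a..b} (\<lambda>s. h s * \<psi> s) + integral {a..b} (\<lambda>s. \<psi> s * R s) = 0"
        using var2 integral_add[OF i1 i2] ibp by simp
      then have "integral {a..b} (\<lambda>s. h s * \<psi> s + \<psi> s * R s) = 0"
        using integral_add[OF i1 i3] by simp
      moreover have "(\<lambda>s. h s * \<psi> s + \<psi> s * R s) = (\<lambda>s. (h s + R s) * ((b - a) * (s - a) ^ (i + 2) - (s - a) ^ (i + 3)))"
        by (rule ext) (simp add: \<psi>_def algebra_simps)
      ultimately show ?thesis by simp
    qed
    have Fc: "continuous_on {a..b} (\<lambda>s. h s + R s)" by (intro continuous_intros ch cR)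
    have "h t + R t = 0" by (rule fund_lemma[OF ab Fc orth t])
    then show "herglotz_lambda a \<alpha> Lz x (Z x) t * Lx t (x t) (caputo_vec a \<alpha> x t) (Z x t) $ j
            + right_RL_deriv a b (\<alpha> j)
                (\<lambda>t. herglotz_lambda a \<alpha> Lz x (Z x) t * Lv t (x t) (caputo_vec a \<alpha> x t) (Z x t) $ j) t = 0"
      unfolding gfun by (simp add: h_def R_def)
  qed
  show ?thesis using part1 part2 by blast
qed

end
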